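(* Let $G=(V,E,p,(V_{E},V_{O}))$ be a parity game and let $\bar\rho$ be the least game parity progress measure of $G$ (least with respect to the pointwise order on functions $V\to\mathbb{M}$). Then for every $v\in V$: (1) there is a strategy $\sigma_{O}$ of player Odd (not necessarily positional) such that every play $\pi$ starting in $v$ and consistent with $\sigma_{O}$ satisfies $\theta(\pi)\ge\bar\rho(v)$; (2) there is a positional strategy $\sigma_{E}$ of player Even such that every play $\pi$ starting in $v$ and consistent with $\sigma_{E}$ satisfies $\theta(\pi)\le\bar\rho(v)$.
   Context: A parity game $G=(V,E,p,(V_{E},V_{O}))$ consists of a finite set $V$ of vertices partitioned into $V_{E}$ (owned by player Even) and $V_{O}$ (owned by player Odd), a total edge relation $E\subseteq V\times V$, and a priority function $p:V\to\mathbb{N}$. Write $\mathrm{post}(v)=\{w:(v,w)\in E\}$ and $V_i=\{v:p(v)=i\}$. A play is an infinite path; Even wins it iff the least priority occurring infinitely often is even, otherwise Odd wins. A strategy of player $X$ is a partial function $\sigma:V^+\to V$ defined only on finite paths ending in a vertex $u_n$ owned by $X$, with value in $\mathrm{post}(u_n)$; positional if its value depends only on the last vertex. A play is consistent with $\sigma$ if $u_{n+1}=\sigma(u_1\cdots u_n)$ whenever defined. Let $d$ be one more than the largest priority. $\mathbb{M}$ consists of $\top$ and all tuples $(m_0,\dots,m_{d-1})\in\mathbb{N}^d$ with $m_i=0$ for even $i$ and $m_i\le|V_i|$ for odd $i$; $\mathbb{M}_{ext}$ consists of $\top$ and all tuples in $\mathbb{N}^d$ that are $0$ at even positions. Tuples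 are ordered lexicographically, $\top$ above all tuples. $m<_i m'$ means $(m_0,\dots,m_i)<(m'_0,\dots,m'_i)$ lexicographically (tuples $<_i\top$, $\top=_i\top$), $m=_i m'$ means agreement on positions $0..i$. For $\rho:V\to\mathbb{M}$ and $w\in\mathrm{post}(v)$, $\mathrm{Prog}(\rho,v,w)$ is the least $m\in\mathbb{M}$ with $m\ge_{p(v)}\rho(w)$ if $p(v)$ is even, and with $m>_{p(v)}\rho(w)$ or $m=\rho(w)=\top$ if $p(v)$ is odd. $\rho$ is a game parity progress measure if each $v\in V_{E}$ has some $w\in\mathrm{post}(v)$ with $\rho(v)\ge_{p(v)}\mathrm{Prog}(\rho,v,w)$, and each $v\in V_{O}$ satisfies this for all $w\in\mathrm{post}(v)$. Play value: for a priority $k$, a $k$-dominated stretch is a finite contiguous part of a play whose minimal priority is $k$; its degree is its number of vertices of priority $k$. $\theta(\pi)\in\mathbb{M}_{ext}$ is $\top$ if Odd wins $\pi$; otherwise it is the tuple with $0$ at even positions and, at each odd position $i$, the degree of the maximal $i$-dominated stretch that is a prefix of $\pi$ ($0$ if none). *)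

theory Defs
  imports Main
begin

text \<open>A parity game is given by a finite vertex set V, an edge relation E on V
 that is total (every vertex has a successor), a priority function p, and the set
 VE of vertices owned by Even; the vertices owned by Odd are V - VE.\<close>

definition parity_game :: "'v set \<Rightarrow> ('v \<times> 'v) set \<Rightarrow> ('v \<Rightarrow> nat) \<Rightarrow> 'v set \<Rightarrow> bool" where
  "parity_game V E p VE \<longleftrightarrow> finite V \<and> E \<subseteq> V \<times> V \<and> (\<forall>v\<in>V. \<exists>w. (v, w) \<in> E) \<and> VE \<subseteq> V"

definition post :: "('v \<times> 'v) set \<Rightarrow> 'v \<Rightarrow> 'v set" where
  "post E v = {w. (v, w) \<in> E}"

definition dim :: "'v set \<Rightarrow> ('v \<Rightarrow> nat) \<Rightarrow> nat" where
  "dim V p = Suc (Max (p ` V))"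

text \<open>None represents top; Some xs represents the tuple xs (of length d).\<close>
type_synonym meas = "nat list option"

definition lex_lt :: "nat list \<Rightarrow> nat list \<Rightarrow> bool" where
  "lex_lt xs ys \<longleftrightarrow> (\<exists>k. k < length xs \<and> k < length ys \<and> take k xs = take k ys \<and> xs ! k < ys ! k)"

definition meas_le :: "meas \<Rightarrow> meas \<Rightarrow> bool" where
  "meas_le m m' = (case m' of None \<Rightarrow> True
      | Some ys \<Rightarrow> (case m of None \<Rightarrow> False | Some xs \<Rightarrow> xs = ys \<or> lex_lt xs ys))"

definition meas_lt_i :: "nat \<Rightarrow> meas \<Rightarrow> meas \<Rightarrow> bool" where
  "meas_lt_i i m m' = (case (m, m') of
       (Some xs, Some ys) \<Rightarrow> lex_lt (take (Suc i) xs) (take (Suc i) ys)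
     | (Some _, None) \<Rightarrow> True
     | _ \<Rightarrow> False)"

definition meas_eq_i :: "nat \<Rightarrow> meas \<Rightarrow> meas \<Rightarrow> bool" where
  "meas_eq_i i m m' = (case (m, m') of
       (Some xs, Some ys) \<Rightarrow> take (Suc i) xs = take (Suc i) ys
     | (None, None) \<Rightarrow> True
     | _ \<Rightarrow> False)"

definition meas_le_i :: "nat \<Rightarrow> meas \<Rightarrow> meas \<Rightarrow> bool" where
  "meas_le_i i m m' \<longleftrightarrow> meas_lt_i i m m' \<or> meas_eq_i i m m'"

definition MM :: "'v set \<Rightarrow> ('v \<Rightarrow> nat) \<Rightarrow> meas set" where
  "MM V p = {None} \<union> Some ` {xs. length xs = dim V p \<and>
      (\<forall>i < dim V p. (even i \<longrightarrow> xs ! i = 0) \<and> (odd i \<longrightarrow> xs ! i \<le> card {v \<in> V. p v = i}))}"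

definition MM_ext :: "'v set \<Rightarrow> ('v \<Rightarrow> nat) \<Rightarrow> meas set" where
  "MM_ext V p = {None} \<union> Some ` {xs. length xs = dim V p \<and> (\<forall>i < dim V p. even i \<longrightarrow> xs ! i = 0)}"

definition prog_cond :: "('v \<Rightarrow> nat) \<Rightarrow> ('v \<Rightarrow> meas) \<Rightarrow> 'v \<Rightarrow> 'v \<Rightarrow> meas \<Rightarrow> bool" where
  "prog_cond p \<rho> v w m = (if even (p v) then meas_le_i (p v) (\<rho> w) m
                         else (meas_lt_i (p v) (\<rho> w) m \<or> (m = None \<and> \<rho> w = None)))"

definition Prog :: "'v set \<Rightarrow> ('v \<Rightarrow> nat) \<Rightarrow> ('v \<Rightarrow> meas) \<Rightarrow> 'v \<Rightarrow> 'v \<Rightarrow> meas" where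
  "Prog V p \<rho> v w = (THE m. m \<in> MM V p \<and> prog_cond p \<rho> v w m \<and>
       (\<forall>m' \<in> MM V p. prog_cond p \<rho> v w m' \<longrightarrow> meas_le m m'))"

definition gppm :: "'v set \<Rightarrow> ('v \<times> 'v) set \<Rightarrow> ('v \<Rightarrow> nat) \<Rightarrow> 'v set \<Rightarrow> ('v \<Rightarrow> meas) \<Rightarrow> bool" where
  "gppm V E p VE \<rho> \<longleftrightarrow> (\<forall>v\<in>V. \<rho> v \<in> MM V p)
     \<and> (\<forall>v\<in>VE. \<exists>w\<in>post E v. meas_le_i (p v) (Prog V p \<rho> v w) (\<rho> v))
     \<and> (\<forall>v\<in>V - VE. \<forall>w\<in>post E v. meas_le_i (p v) (Prog V p \<rho> v w) (\<rho> v))"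

definition least_gppm :: "'v set \<Rightarrow> ('v \<times> 'v) set \<Rightarrow> ('v \<Rightarrow> nat) \<Rightarrow> 'v set \<Rightarrow> ('v \<Rightarrow> meas) \<Rightarrow> bool" where
  "least_gppm V E p VE \<rho> \<longleftrightarrow> gppm V E p VE \<rho>
     \<and> (\<forall>\<rho>'. gppm V E p VE \<rho>' \<longrightarrow> (\<forall>v\<in>V. meas_le (\<rho> v) (\<rho>' v)))"

definition play :: "'v set \<Rightarrow> ('v \<times> 'v) set \<Rightarrow> (nat \<Rightarrow> 'v) \<Rightarrow> bool" where
  "play V E \<pi> \<longleftrightarrow> (\<forall>i. \<pi> i \<in> V \<and> (\<pi> i, \<pi> (Suc i)) \<in> E)"

definition even_wins :: "('v \<Rightarrow> nat) \<Rightarrow> (nat \<Rightarrow> 'v) \<Rightarrow> bool" where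
  "even_wins p \<pi> \<longleftrightarrow> even (Min {k. \<exists>\<^sub>\<infinity> i. p (\<pi> i) = k})"

definition strategy :: "'v set \<Rightarrow> ('v \<times> 'v) set \<Rightarrow> 'v set \<Rightarrow> ('v list \<Rightarrow> 'v) \<Rightarrow> bool" where
  "strategy V E VX \<sigma> \<longleftrightarrow>
     (\<forall>xs. xs \<noteq> [] \<and> set xs \<subseteq> V \<and> last xs \<in> VX \<longrightarrow> \<sigma> xs \<in> post E (last xs))"

definition positional :: "'v set \<Rightarrow> 'v set \<Rightarrow> ('v list \<Rightarrow> 'v) \<Rightarrow> bool" where
  "positional V VX \<sigma> \<longleftrightarrow> (\<forall>xs ys. xs \<noteq> [] \<and> ys \<noteq> [] \<and> set xs \<subseteq> V \<and> set ys \<subseteq> V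
      \<and> last xs \<in> VX \<and> last xs = last ys \<longrightarrow> \<sigma> xs = \<sigma> ys)"

definition consistent :: "'v set \<Rightarrow> ('v list \<Rightarrow> 'v) \<Rightarrow> (nat \<Rightarrow> 'v) \<Rightarrow> bool" where
  "consistent VX \<sigma> \<pi> \<longleftrightarrow> (\<forall>n. \<pi> n \<in> VX \<longrightarrow> \<pi> (Suc n) = \<sigma> (map \<pi> [0..<Suc n]))"

text \<open>Degree of the maximal i-dominated stretch that is a prefix of the play:
 the supremum of the number of priority-i vertices over all nonempty prefixes whose
 minimal priority is i (0 if there is none).\<close>
definition degree :: "('v \<Rightarrow> nat) \<Rightarrow> (nat \<Rightarrow> 'v) \<Rightarrow> nat \<Rightarrow> nat" where
  "degree p \<pi> i = Sup {card {j. j < n \<and> p (\<pi> j) = i} | n. 0 < n \<and> Min (p ` \<pi> ` {..<n}) = i}"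

definition theta :: "'v set \<Rightarrow> ('v \<Rightarrow> nat) \<Rightarrow> (nat \<Rightarrow> 'v) \<Rightarrow> meas" where
  "theta V p \<pi> = (if even_wins p \<pi>
       then Some (map (\<lambda>i. if even i then 0 else degree p \<pi> i) [0..<dim V p])
       else None)"

end

theory Submission
  imports Defs "HOL-Library.Infinite_Set"
begin

lemma lex_lt_nth:
  assumes "length xs = n" "length ys = n"
  shows "lex_lt xs ys \<longleftrightarrow> (\<exists>k<n. (\<forall>j<k. xs!j = ys!j) \<and> xs!k < ys!k)"
proof -
  have t: "take k xs = take k ys \<longleftrightarrow> (\<forall>j<k. xs!j = ys!j)" if "k < n" for k
    using that assms by (auto simp: list_eq_iff_nth_eq)
  show ?thesis unfolding lex_lt_def using t assms by auto
qed

lemma lex_lt_lexord: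
  "length xs = length ys \<Longrightarrow> lex_lt xs ys \<longleftrightarrow> (xs, ys) \<in> lexord {(a,b). a < (b::nat)}"
  unfolding lex_lt_def lexord_take_index_conv by auto

lemma lex_lt_irrefl: "\<not> lex_lt xs xs"
  unfolding lex_lt_def by auto

lemma lex_lt_trans:
  assumes "length xs = length ys" "length ys = length zs" "lex_lt xs ys" "lex_lt ys zs"
  shows "lex_lt xs zs"
proof -
  have "trans {(a,b). a < (b::nat)}" by (auto simp: trans_def)
  then show ?thesis using assms lexord_trans[of xs ys "{(a,b). a < (b::nat)}" zs]
    by (simp add: lex_lt_lexord)
qed

lemma lex_lt_total:
  assumes "length xs = length ys" "xs \<noteq> ys"
  shows "lex_lt xs ys \<or> lex_lt ys xs"
proof -
  have "(xs,ys) \<in> lexord {(a,b). a < (b::nat)} \<or> xs = ys \<or> (ys,xs) \<in> lexord {(a,b). a < (b::nat)}"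
    by (rule lexord_linear) auto
  then show ?thesis using assms lex_lt_lexord[of xs ys] lex_lt_lexord[of ys xs] by auto
qed

lemma lex_lt_asym:
  assumes "length xs = length ys" "lex_lt xs ys" shows "\<not> lex_lt ys xs"
  by (metis assms lex_lt_trans lex_lt_irrefl)

definition wl :: "nat \<Rightarrow> meas \<Rightarrow> bool" where
  "wl n m \<longleftrightarrow> (case m of None \<Rightarrow> True | Some xs \<Rightarrow> length xs = n)"

lemma wl_simps[simp]: "wl n None" "wl n (Some xs) \<longleftrightarrow> length xs = n"
  by (auto simp: wl_def)

lemma meas_le_simps[simp]:
  "meas_le m None"
  "meas_le None (Some ys) \<longleftrightarrow> False"
  "meas_le (Some xs) (Some ys) \<longleftrightarrow> xs = ys \<or> lex_lt xs ys"
  by (auto simp: meas_le_def split: option.splits)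

lemma meas_le_refl[simp]: "meas_le m m"
  by (cases m) auto

lemma meas_le_trans:
  assumes "wl n a" "wl n b" "wl n c" "meas_le a b" "meas_le b c"
  shows "meas_le a c"
proof (cases a)
  case (Some xs)
  show ?thesis
  proof (cases c)
    case (Some zs)
    with \<open>a = Some xs\<close> assms obtain ys where b: "b = Some ys" by (cases b) auto
    show ?thesis using assms Some \<open>a = Some xs\<close> b lex_lt_trans[of xs ys zs] by auto
  qed simp
next
  case None
  then show ?thesis using assms by (cases b; cases c) auto
qed

lemma meas_le_total:
  assumes "wl n a" "wl n b"
  shows "meas_le a b \<or> meas_le b a"
  using assms lex_lt_total
  by (cases a; cases b) auto

lemma meas_le_antisym:
  assumes "wl n a" "wl n b" "meas_le a b" "meas_le b a"
  shows "a = b"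
proof (cases a)
  case (Some xs)
  then obtain ys where b: "b = Some ys" using assms by (cases b) auto
  show ?thesis using assms Some b lex_lt_asym[of xs ys] by auto
next
  case None
  then show ?thesis using assms by (cases b) auto
qed

lemma zero_tail_le:
  assumes "length xs = n" "length ys = n" "\<forall>j<m. xs!j = ys!j" "\<forall>j. m \<le> j \<longrightarrow> j < n \<longrightarrow> xs!j = 0"
  shows "xs = ys \<or> lex_lt xs ys"
proof (cases "xs = ys")
  case False
  then have "\<exists>j<n. xs!j \<noteq> ys!j" using assms by (auto simp: list_eq_iff_nth_eq)
  define k where "k = (LEAST j. j < n \<and> xs!j \<noteq> ys!j)"
  have k: "k < n \<and> xs!k \<noteq> ys!k" unfolding k_def
    by (rule LeastI_ex) (use \<open>\<exists>j<n. xs!j \<noteq> ys!j\<close> in auto)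
  have below: "\<forall>j<k. xs!j = ys!j"
    using not_less_Least k unfolding k_def by (metis (mono_tags, lifting) order.strict_trans)
  have "m \<le> k" using assms(3) k by (metis not_le)
  then have "xs!k < ys!k" using assms(4) k by auto
  then show ?thesis using lex_lt_nth[OF assms(1,2)] k below by blast
qed simp

lemma ex_min:
  assumes "finite S" "S \<noteq> {}"
    "\<forall>a\<in>S. \<forall>b\<in>S. R a b \<or> R b a"
    "\<forall>a\<in>S. \<forall>b\<in>S. \<forall>c\<in>S. R a b \<longrightarrow> R b c \<longrightarrow> R a c"
  shows "\<exists>m\<in>S. \<forall>x\<in>S. R m x"
  using assms
proof (induction S rule: finite_ne_induct)
  case (singleton x) then show ?case by blast
next
  case (insert x F)
  have t1: "\<forall>a\<in>F. \<forall>b\<in>F. R a b \<or> R b a" using insert.prems(1) by blast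
  have t2: "\<forall>a\<in>F. \<forall>b\<in>F. \<forall>c\<in>F. R a b \<longrightarrow> R b c \<longrightarrow> R a c" using insert.prems(2) by blast
  obtain m where m: "m \<in> F" "\<forall>y\<in>F. R m y" using insert.IH[OF t1 t2] by blast
  show ?case
  proof (cases "R m x")
    case True
    show ?thesis
    proof (rule bexI[of _ m])
      show "\<forall>y\<in>insert x F. R m y" using True m by blast
      show "m \<in> insert x F" using m by blast
    qed
  next
    case False
    have xx: "R x x" using insert.prems(1) by blast
    have xm: "R x m" using False insert.prems(1) m(1) by blast
    have "\<forall>y\<in>F. R x y"
    proof
      fix y assume "y \<in> F"
      then show "R x y" using insert.prems(2) xm m by blast
    qed
    then show ?thesis using xx by blast
  qed
qed

definition extl :: "nat \<Rightarrow> nat \<Rightarrow> nat list \<Rightarrow> nat list" where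
  "extl d q xs = map (\<lambda>i. if i < q then xs!i else if i = q then (if odd q then Suc (xs!q) else xs!q) else 0) [0..<d]"

definition ext :: "nat \<Rightarrow> nat \<Rightarrow> meas \<Rightarrow> meas" where
  "ext d q m = map_option (extl d q) m"

lemma ext_simps[simp]: "ext d q None = None" "ext d q (Some xs) = Some (extl d q xs)"
  by (auto simp: ext_def)

lemma extl_length[simp]: "length (extl d q xs) = d"
  by (simp add: extl_def)

lemma extl_nth: "i < d \<Longrightarrow> extl d q xs ! i = (if i < q then xs!i else if i = q then (if odd q then Suc (xs!q) else xs!q) else 0)"
  by (simp add: extl_def)

lemma ext_wl[simp]: "wl d (ext d q m)"
  by (cases m) auto

lemma extl_mono:
  assumes "length xs = d" "length ys = d" "q < d" "xs = ys \<or> lex_lt xs ys"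
  shows "extl d q xs = extl d q ys \<or> lex_lt (extl d q xs) (extl d q ys)"
proof (cases "xs = ys")
  case False
  then have "lex_lt xs ys" using assms by auto
  then obtain k where k: "k < d" "\<forall>j<k. xs!j = ys!j" "xs!k < ys!k"
    using lex_lt_nth[OF assms(1,2)] by auto
  show ?thesis
  proof (cases "k \<le> q")
    case True
    have "\<forall>j<k. extl d q xs ! j = extl d q ys ! j" using k True assms(3) by (auto simp: extl_nth)
    moreover have "extl d q xs ! k < extl d q ys ! k" using k True by (auto simp: extl_nth)
    ultimately show ?thesis using lex_lt_nth[of "extl d q xs" d "extl d q ys"] k by auto
  next
    case False
    then have "extl d q xs = extl d q ys" using k assms
      by (auto simp: list_eq_iff_nth_eq extl_nth)
    then show ?thesis by simp
  qed
qed simp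

lemma ext_mono:
  assumes "wl d a" "wl d b" "q < d" "meas_le a b"
  shows "meas_le (ext d q a) (ext d q b)"
  using assms extl_mono[of _ d _ q]
  by (cases a; cases b) auto

lemma meas_le_i_conv:
  "meas_le_i q a b \<longleftrightarrow> meas_le (map_option (take (Suc q)) a) (map_option (take (Suc q)) b)"
  by (cases a; cases b) (auto simp: meas_le_i_def meas_lt_i_def meas_eq_i_def)

lemma lexle_take:
  assumes "length xs = d" "length ys = d" "xs = ys \<or> lex_lt xs ys" "m \<le> d"
  shows "take m xs = take m ys \<or> lex_lt (take m xs) (take m ys)"
proof (cases "xs = ys")
  case False
  then have "lex_lt xs ys" using assms by auto
  then obtain k where k: "k < d" "\<forall>j<k. xs!j = ys!j" "xs!k < ys!k"
    using lex_lt_nth[OF assms(1,2)] by auto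
  show ?thesis
  proof (cases "k < m")
    case True
    then show ?thesis using lex_lt_nth[of "take m xs" m "take m ys"] k assms by auto
  next
    case False
    then show ?thesis using k assms by (auto simp: list_eq_iff_nth_eq)
  qed
qed simp

lemma le_imp_le_i:
  assumes "wl d a" "wl d b" "q < d" "meas_le a b"
  shows "meas_le_i q a b"
  unfolding meas_le_i_conv using assms lexle_take[of _ d _ "Suc q"]
  by (cases a; cases b) auto

lemma le_i_trans:
  assumes "wl d a" "wl d b" "wl d c" "q < d" "meas_le_i q a b" "meas_le_i q b c"
  shows "meas_le_i q a c"
proof -
  have w: "wl (Suc q) (map_option (take (Suc q)) x)" if "wl d x" for x
    using that assms(4) by (cases x) auto
  show ?thesis using assms meas_le_trans[OF w w w] unfolding meas_le_i_conv
    by blast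
qed

lemma le_i_zero_imp_le:
  assumes "length xs = d" "wl d b" "q < d" "\<forall>j. q < j \<longrightarrow> j < d \<longrightarrow> xs!j = 0"
    "meas_le_i q (Some xs) b"
  shows "meas_le (Some xs) b"
proof (cases b)
  case (Some ys)
  have ly: "length ys = d" using assms Some by auto
  have "take (Suc q) xs = take (Suc q) ys \<or> lex_lt (take (Suc q) xs) (take (Suc q) ys)"
    using assms(5) Some by (simp add: meas_le_i_conv)
  then show ?thesis
  proof
    assume "take (Suc q) xs = take (Suc q) ys"
    then have "\<forall>j<Suc q. xs!j = ys!j" using assms ly by (metis nth_take)
    then show ?thesis using zero_tail_le[OF assms(1) ly, of "Suc q"] assms(4) Some by auto
  next
    assume "lex_lt (take (Suc q) xs) (take (Suc q) ys)"
    then obtain k where k: "k < Suc q" "\<forall>j<k. take (Suc q) xs!j = take (Suc q) ys!j"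
        "take (Suc q) xs!k < take (Suc q) ys!k"
      using lex_lt_nth[of "take (Suc q) xs" "Suc q" "take (Suc q) ys"] assms ly by auto
    then have "\<forall>j<k. xs!j = ys!j" "xs!k < ys!k" by auto
    have "k < d" using k(1) assms(3) by simp
    then have "lex_lt xs ys" using lex_lt_nth[OF assms(1) ly] \<open>\<forall>j<k. xs!j = ys!j\<close> \<open>xs!k < ys!k\<close> by blast
    then show ?thesis using Some by simp
  qed
qed simp

lemma extl_zero: "\<forall>j. q < j \<longrightarrow> j < d \<longrightarrow> extl d q xs ! j = 0"
  by (auto simp: extl_nth)

lemma odd_lt_iff:
  assumes "length xs = d" "length ys = d" "q < d" "odd q"
  shows "lex_lt (take (Suc q) xs) (take (Suc q) ys) \<longleftrightarrow> (extl d q xs = ys \<or> lex_lt (extl d q xs) ys)"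
    (is "?L \<longleftrightarrow> ?R")
proof
  assume ?L
  then obtain k where k: "k < Suc q" "\<forall>j<k. take (Suc q) xs!j = take (Suc q) ys!j"
      "take (Suc q) xs!k < take (Suc q) ys!k"
    using lex_lt_nth[of "take (Suc q) xs" "Suc q" "take (Suc q) ys"] assms by auto
  then have kk: "\<forall>j<k. xs!j = ys!j" "xs!k < ys!k" by auto
  show ?R
  proof (cases "k < q")
    case True
    have "\<forall>j<k. extl d q xs!j = ys!j" "extl d q xs!k < ys!k"
      using kk True assms by (auto simp: extl_nth)
    moreover have "k < d" using True assms by simp
    ultimately show ?thesis using lex_lt_nth[of "extl d q xs" d ys] assms by auto
  next
    case False
    then have kq: "k = q" using k by auto
    have below: "\<forall>j<q. extl d q xs!j = ys!j" using kk kq assms by (auto simp: extl_nth)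
    have "extl d q xs!q \<le> ys!q" using kk kq assms by (auto simp: extl_nth)
    then consider "extl d q xs!q < ys!q" | "extl d q xs!q = ys!q" by linarith
    then show ?thesis
    proof cases
      case 1 then show ?thesis using lex_lt_nth[of "extl d q xs" d ys] below assms by auto
    next
      case 2
      then have "\<forall>j<Suc q. extl d q xs!j = ys!j" using below less_Suc_eq by auto
      then show ?thesis using zero_tail_le[of "extl d q xs" d ys "Suc q"] assms extl_zero[of q d xs]
        by auto
    qed
  qed
next
  assume R: ?R
  have tl: "length (take (Suc q) xs) = Suc q" "length (take (Suc q) ys) = Suc q" using assms by auto
  have key: "\<exists>k<Suc q. (\<forall>j<k. xs!j = ys!j) \<and> xs!k < ys!k"
  proof (cases "extl d q xs = ys")
    case True
    then show ?thesis using assms by (auto simp: extl_nth intro!: exI[of _ q])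
  next
    case False
    then obtain k where k: "k < d" "\<forall>j<k. extl d q xs!j = ys!j" "extl d q xs!k < ys!k"
      using R lex_lt_nth[of "extl d q xs" d ys] assms by auto
    show ?thesis
    proof (cases "k \<le> q")
      case True
      then show ?thesis using k assms
        by (intro exI[of _ k]) (auto simp: extl_nth split: if_splits)
    next
      case False
      have e: "extl d q xs!j = ys!j" if "j \<le> q" for j using k(2) False that by auto
      have "\<forall>j<q. xs!j = ys!j"
      proof (intro allI impI)
        fix j assume "j < q"
        then show "xs!j = ys!j" using e[of j] assms by (simp add: extl_nth)
      qed
      moreover have "extl d q xs!q = ys!q" using e by auto
      ultimately show ?thesis using assms by (intro exI[of _ q]) (auto simp: extl_nth)
    qed
  qed
  then show ?L using lex_lt_nth[OF tl] by auto
qed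

lemma prog_cond_iff:
  assumes "wl d (\<rho> w)" "wl d m" "p v < d"
  shows "prog_cond p \<rho> v w m \<longleftrightarrow> meas_le (ext d (p v) (\<rho> w)) m"
proof (cases "even (p v)")
  case True
  have R: "meas_le (ext d (p v) (\<rho> w)) m \<longleftrightarrow> meas_le_i (p v) (ext d (p v) (\<rho> w)) m"
  proof (cases "\<rho> w")
    case None then show ?thesis by (cases m) (auto simp: meas_le_i_conv)
  next
    case (Some xs)
    show ?thesis using le_imp_le_i[of d "ext d (p v) (\<rho> w)" m "p v"]
        le_i_zero_imp_le[of "extl d (p v) xs" d m "p v"] assms Some extl_zero[of "p v" d xs] by auto
  qed
  have tk: "map_option (take (Suc (p v))) (ext d (p v) (\<rho> w)) = map_option (take (Suc (p v))) (\<rho> w)"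
    using True assms by (cases "\<rho> w") (auto simp: list_eq_iff_nth_eq extl_nth less_Suc_eq)
  show ?thesis unfolding prog_cond_def using True R tk by (simp add: meas_le_i_conv)
next
  case False
  show ?thesis
  proof (cases "\<rho> w")
    case None then show ?thesis using False unfolding prog_cond_def
      by (cases m) (auto simp: meas_lt_i_def)
  next
    case S: (Some xs)
    show ?thesis
    proof (cases m)
      case None then show ?thesis using False S unfolding prog_cond_def by (auto simp: meas_lt_i_def)
    next
      case (Some ys)
      then show ?thesis using False S assms odd_lt_iff[of xs d ys "p v"] unfolding prog_cond_def
        by (auto simp: meas_lt_i_def)
    qed
  qed
qed

locale pgame =
  fixes V :: "'v set" and E :: "('v \<times> 'v) set" and p :: "'v \<Rightarrow> nat" and VE :: "'v set"
  assumes pg: "parity_game V E p VE"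
begin

abbreviation "d \<equiv> dim V p"

lemma finV: "finite V" using pg by (simp add: parity_game_def)
lemma E_sub: "(u, w) \<in> E \<Longrightarrow> u \<in> V \<and> w \<in> V" using pg by (auto simp: parity_game_def)
lemma total: "u \<in> V \<Longrightarrow> \<exists>w. (u, w) \<in> E" using pg by (simp add: parity_game_def)
lemma VE_sub: "VE \<subseteq> V" using pg by (simp add: parity_game_def)

lemma post_sub: "post E u \<subseteq> V" using E_sub by (auto simp: post_def)
lemma post_ne: "u \<in> V \<Longrightarrow> post E u \<noteq> {}" using total by (auto simp: post_def)
lemma post_fin: "finite (post E u)" using post_sub finV finite_subset by blast

lemma p_lt_d: "v \<in> V \<Longrightarrow> p v < d"
  unfolding dim_def using finV by (simp add: le_imp_less_Suc)

lemma Some_MM: "Some xs \<in> MM V p \<longleftrightarrow> length xs = d \<and>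
      (\<forall>i < d. (even i \<longrightarrow> xs ! i = 0) \<and> (odd i \<longrightarrow> xs ! i \<le> card {v \<in> V. p v = i}))"
  unfolding MM_def by auto

lemma None_MM[simp]: "None \<in> MM V p" unfolding MM_def by auto

lemma MM_wl: "m \<in> MM V p \<Longrightarrow> wl d m"
  by (cases m) (auto simp: Some_MM)

lemma finite_MM: "finite (MM V p)"
proof -
  have "MM V p \<subseteq> insert None (Some ` {xs. set xs \<subseteq> {0..card V} \<and> length xs = d})"
  proof
    fix m assume m: "m \<in> MM V p"
    show "m \<in> insert None (Some ` {xs. set xs \<subseteq> {0..card V} \<and> length xs = d})"
    proof (cases m)
      case (Some xs)
      have "\<forall>x\<in>set xs. x \<le> card V"
      proof
        fix x assume "x \<in> set xs"
        then obtain i where i: "i < length xs" "xs!i = x" by (auto simp: in_set_conv_nth)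
        have "card {v \<in> V. p v = i} \<le> card V" using finV by (intro card_mono) auto
        then show "x \<le> card V" using m Some i by (auto simp: Some_MM)
      qed
      then show ?thesis using m Some by (auto simp: Some_MM)
    qed simp
  qed
  moreover have "finite (insert None (Some ` {xs. set xs \<subseteq> {0..card V} \<and> length xs = d}))"
    by (intro finite_insert[THEN iffD2] finite_imageI finite_lists_length_eq) simp
  ultimately show ?thesis using finite_subset by blast
qed

lemma zero_MM: "Some (replicate d 0) \<in> MM V p"
  by (auto simp: Some_MM)

lemma zero_le: assumes "wl d m" shows "meas_le (Some (replicate d 0)) m"
proof (cases m)
  case (Some a)
  then show ?thesis using zero_tail_le[of "replicate d 0" d a 0] assms by auto
qed simp

lemma Prog_props:
  assumes "\<rho> w \<in> MM V p" "v \<in> V"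
  shows "Prog V p \<rho> v w \<in> MM V p \<and> meas_le (ext d (p v) (\<rho> w)) (Prog V p \<rho> v w)
     \<and> (\<forall>m\<in>MM V p. meas_le (ext d (p v) (\<rho> w)) m \<longrightarrow> meas_le (Prog V p \<rho> v w) m)"
proof -
  have pc: "prog_cond p \<rho> v w m \<longleftrightarrow> meas_le (ext d (p v) (\<rho> w)) m" if "m \<in> MM V p" for m
    using prog_cond_iff[of d \<rho> w m p v] MM_wl[OF assms(1)] MM_wl[OF that] p_lt_d[OF assms(2)] by auto
  let ?S = "{m \<in> MM V p. meas_le (ext d (p v) (\<rho> w)) m}"
  have "\<exists>m\<in>?S. \<forall>x\<in>?S. meas_le m x"
  proof (rule ex_min)
    show "finite ?S" using finite_MM by auto
    show "?S \<noteq> {}" using None_MM by fastforce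
    show "\<forall>a\<in>?S. \<forall>b\<in>?S. meas_le a b \<or> meas_le b a" using meas_le_total MM_wl by blast
    show "\<forall>a\<in>?S. \<forall>b\<in>?S. \<forall>c\<in>?S. meas_le a b \<longrightarrow> meas_le b c \<longrightarrow> meas_le a c"
      using meas_le_trans MM_wl by blast
  qed
  then obtain m0 where m0: "m0 \<in> ?S" "\<forall>x\<in>?S. meas_le m0 x" by blast
  have ex: "\<exists>!m. m \<in> MM V p \<and> prog_cond p \<rho> v w m \<and> (\<forall>m' \<in> MM V p. prog_cond p \<rho> v w m' \<longrightarrow> meas_le m m')"
  proof (rule ex1I[of _ m0])
    show "m0 \<in> MM V p \<and> prog_cond p \<rho> v w m0 \<and> (\<forall>m' \<in> MM V p. prog_cond p \<rho> v w m' \<longrightarrow> meas_le m0 m')"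
      using m0 pc by auto
  next
    fix m assume m: "m \<in> MM V p \<and> prog_cond p \<rho> v w m \<and> (\<forall>m' \<in> MM V p. prog_cond p \<rho> v w m' \<longrightarrow> meas_le m m')"
    then have "meas_le m m0" "meas_le m0 m" using m0 pc by auto
    then show "m = m0" using meas_le_antisym MM_wl m m0 by blast
  qed
  have "Prog V p \<rho> v w \<in> MM V p \<and> prog_cond p \<rho> v w (Prog V p \<rho> v w) \<and>
      (\<forall>m' \<in> MM V p. prog_cond p \<rho> v w m' \<longrightarrow> meas_le (Prog V p \<rho> v w) m')"
    unfolding Prog_def by (rule theI'[OF ex])
  then show ?thesis using pc by auto
qed

lemma gppm_step:
  assumes "\<forall>v\<in>V. \<rho> v \<in> MM V p" "u \<in> V" "w \<in> post E u" "meas_le_i (p u) (Prog V p \<rho> u w) (\<rho> u)"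
  shows "meas_le (ext d (p u) (\<rho> w)) (\<rho> u)"
proof -
  have wV: "w \<in> V" using assms post_sub by auto
  have wMM: "\<rho> w \<in> MM V p" using assms(1) wV by auto
  have P: "Prog V p \<rho> u w \<in> MM V p \<and> meas_le (ext d (p u) (\<rho> w)) (Prog V p \<rho> u w)
     \<and> (\<forall>m\<in>MM V p. meas_le (ext d (p u) (\<rho> w)) m \<longrightarrow> meas_le (Prog V p \<rho> u w) m)"
    using Prog_props wMM assms(2) by blast
  have q: "p u < d" using p_lt_d assms by auto
  have wlr: "wl d (\<rho> u)" "wl d (\<rho> w)" using MM_wl assms wV by auto
  have "meas_le_i (p u) (ext d (p u) (\<rho> w)) (Prog V p \<rho> u w)"
    using le_imp_le_i[of d _ _ "p u"] P q MM_wl by auto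
  then have L: "meas_le_i (p u) (ext d (p u) (\<rho> w)) (\<rho> u)"
    using le_i_trans[of d _ "Prog V p \<rho> u w" "\<rho> u" "p u"] assms(4) P q wlr MM_wl by auto
  show ?thesis
  proof (cases "\<rho> w")
    case None
    then show ?thesis using L by (cases "\<rho> u") (auto simp: meas_le_i_conv)
  next
    case (Some xs)
    then show ?thesis using le_i_zero_imp_le[of "extl d (p u) xs" d "\<rho> u" "p u"] L q wlr extl_zero
      by auto
  qed
qed

lemma gppm_back:
  assumes "\<rho> w \<in> MM V p" "u \<in> V" "c \<in> MM V p" "meas_le (ext d (p u) (\<rho> w)) c" "meas_le c x" "x \<in> MM V p"
  shows "meas_le_i (p u) (Prog V p \<rho> u w) x"
proof -
  have P: "Prog V p \<rho> u w \<in> MM V p \<and> meas_le (ext d (p u) (\<rho> w)) (Prog V p \<rho> u w)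
     \<and> (\<forall>m\<in>MM V p. meas_le (ext d (p u) (\<rho> w)) m \<longrightarrow> meas_le (Prog V p \<rho> u w) m)"
    using Prog_props assms(1,2) by blast
  have "meas_le (Prog V p \<rho> u w) c" using P assms by auto
  then have "meas_le (Prog V p \<rho> u w) x" using meas_le_trans MM_wl P assms by blast
  then show ?thesis using le_imp_le_i MM_wl P assms p_lt_d by blast
qed

end

definition SS :: "('v \<Rightarrow> nat) \<Rightarrow> (nat \<Rightarrow> 'v) \<Rightarrow> nat \<Rightarrow> nat set" where
  "SS p \<pi> i = {j. p (\<pi> j) = i \<and> (\<forall>k\<le>j. i \<le> p (\<pi> k))}"

definition infp :: "('v \<Rightarrow> nat) \<Rightarrow> (nat \<Rightarrow> 'v) \<Rightarrow> nat set" where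
  "infp p \<pi> = {k. \<exists>\<^sub>\<infinity> i. p (\<pi> i) = k}"

lemma even_wins_infp: "even_wins p \<pi> \<longleftrightarrow> even (Min (infp p \<pi>))"
  by (simp add: even_wins_def infp_def)

lemma degree_eq:
  assumes "finite (SS p \<pi> i)"
  shows "degree p \<pi> i = card (SS p \<pi> i)"
proof -
  let ?A = "{card {j. j < n \<and> p (\<pi> j) = i} | n. 0 < n \<and> Min (p ` \<pi> ` {..<n}) = i}"
  have sub: "{j. j < n \<and> p (\<pi> j) = i} \<subseteq> SS p \<pi> i" if "0 < n" "Min (p ` \<pi> ` {..<n}) = i" for n
  proof
    fix j assume j: "j \<in> {j. j < n \<and> p (\<pi> j) = i}"
    have "\<forall>k\<le>j. i \<le> p (\<pi> k)"
    proof (intro allI impI)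
      fix k assume "k \<le> j"
      then have "p (\<pi> k) \<in> p ` \<pi> ` {..<n}" using j by auto
      have fin: "finite (p ` \<pi> ` {..<n})" by simp
      have "Min (p ` \<pi> ` {..<n}) \<le> p (\<pi> k)" by (rule Min_le[OF fin \<open>p (\<pi> k) \<in> p ` \<pi> ` {..<n}\<close>])
      then show "i \<le> p (\<pi> k)" using that by simp
    qed
    then show "j \<in> SS p \<pi> i" using j by (simp add: SS_def)
  qed
  have bound: "x \<le> card (SS p \<pi> i)" if x: "x \<in> ?A" for x
  proof -
    obtain n where n: "x = card {j. j < n \<and> p (\<pi> j) = i}" "0 < n" "Min (p ` \<pi> ` {..<n}) = i"
      using x by blast
    show ?thesis using card_mono[OF assms sub[OF n(2,3)]] n(1) by simp
  qed
  show ?thesis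
  proof (cases "SS p \<pi> i = {}")
    case True
    have "?A = {}"
    proof (rule ccontr)
      assume "?A \<noteq> {}"
      then obtain n where n: "0 < n" "Min (p ` \<pi> ` {..<n}) = i" by auto
      have "Min (p ` \<pi> ` {..<n}) \<in> p ` \<pi> ` {..<n}" using n by (intro Min_in) auto
      then obtain j where "j < n" "p (\<pi> j) = i" using n by auto
      then show False using sub[OF n] True by auto
    qed
    note e = this
    show ?thesis unfolding degree_def by (subst e) (simp add: True)
  next
    case False
    define m where "m = Max (SS p \<pi> i)"
    have mS: "m \<in> SS p \<pi> i" using False assms m_def by auto
    have leq: "j \<le> m" if "j \<in> SS p \<pi> i" for j using that assms m_def by auto
    have mn: "Min (p ` \<pi> ` {..<Suc m}) = i"
    proof (rule Min_eqI)
      show "finite (p ` \<pi> ` {..<Suc m})" by auto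
      show "\<And>y. y \<in> p ` \<pi> ` {..<Suc m} \<Longrightarrow> i \<le> y" using mS by (auto simp: SS_def)
      show "i \<in> p ` \<pi> ` {..<Suc m}" using mS by (auto simp: SS_def)
    qed
    have eq: "{j. j < Suc m \<and> p (\<pi> j) = i} = SS p \<pi> i"
    proof
      show "SS p \<pi> i \<subseteq> {j. j < Suc m \<and> p (\<pi> j) = i}" using leq by (auto simp: SS_def less_Suc_eq_le)
      show "{j. j < Suc m \<and> p (\<pi> j) = i} \<subseteq> SS p \<pi> i" using sub[OF _ mn] by auto
    qed
    have "\<exists>n. card (SS p \<pi> i) = card {j. j < n \<and> p (\<pi> j) = i} \<and> 0 < n \<and> Min (p ` \<pi> ` {..<n}) = i"
      using mn eq by (intro exI[of _ "Suc m"]) simp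
    then have mem: "card (SS p \<pi> i) \<in> ?A" by blast
    show ?thesis unfolding degree_def by (rule cSup_eq_maximum[OF mem bound])
  qed
qed

lemma INFM_shift: "(\<exists>\<^sub>\<infinity> j. P (j + t)) \<longleftrightarrow> (\<exists>\<^sub>\<infinity> j. P (j::nat))"
proof
  assume "\<exists>\<^sub>\<infinity> j. P (j + t)"
  then have a: "\<forall>m. \<exists>n>m. P (n + t)" unfolding INFM_nat .
  show "\<exists>\<^sub>\<infinity> j. P j" unfolding INFM_nat
  proof
    fix m obtain n where "n > m" "P (n + t)" using a by blast
    then show "\<exists>n>m. P n" by (intro exI[of _ "n + t"]) auto
  qed
next
  assume a: "\<exists>\<^sub>\<infinity> j. P j"
  show "\<exists>\<^sub>\<infinity> j. P (j + t)" unfolding INFM_nat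
  proof
    fix m
    obtain n where "n > m + t" "P n" using a unfolding INFM_nat by blast
    then show "\<exists>n>m. P (n + t)" by (intro exI[of _ "n - t"]) auto
  qed
qed

lemma infp_shift: "infp p (\<lambda>j. \<pi> (j + t)) = infp p \<pi>"
  unfolding infp_def using INFM_shift[of "\<lambda>j. p (\<pi> j) = _" t] by auto

lemma even_wins_shift: "even_wins p (\<lambda>j. \<pi> (j + t)) \<longleftrightarrow> even_wins p \<pi>"
  by (simp add: even_wins_infp infp_shift)

lemma even_wins_Suc: "even_wins p (\<lambda>j. \<pi> (Suc j)) \<longleftrightarrow> even_wins p \<pi>"
  using even_wins_shift[of p \<pi> 1] by simp

context pgame
begin

lemma infp_fin: "range \<pi> \<subseteq> V \<Longrightarrow> finite (infp p \<pi>)"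
proof -
  assume r: "range \<pi> \<subseteq> V"
  have "infp p \<pi> \<subseteq> p ` V"
  proof
    fix k assume "k \<in> infp p \<pi>"
    then have "infinite {i. p (\<pi> i) = k}" by (simp add: infp_def INFM_iff_infinite)
    then obtain i where "p (\<pi> i) = k" using not_finite_existsD by auto
    then show "k \<in> p ` V" using r by auto
  qed
  then show ?thesis using finV finite_subset by blast
qed

lemma infp_ne: "range \<pi> \<subseteq> V \<Longrightarrow> infp p \<pi> \<noteq> {}"
proof -
  assume r: "range \<pi> \<subseteq> V"
  have "(\<lambda>i. p (\<pi> i)) ` UNIV \<subseteq> p ` V" using r by auto
  then have "finite ((\<lambda>i. p (\<pi> i)) ` UNIV)" using finV finite_subset by blast
  then obtain y where "infinite ((\<lambda>i. p (\<pi> i)) -` {y})" using inf_img_fin_dom[of "\<lambda>i. p (\<pi> i)" UNIV] by auto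
  then have "y \<in> infp p \<pi>" by (simp add: infp_def INFM_iff_infinite vimage_def)
  then show ?thesis by auto
qed

lemma min_infp:
  assumes "range \<pi> \<subseteq> V"
  shows "\<exists>N. \<forall>n\<ge>N. Min (infp p \<pi>) \<le> p (\<pi> n)" "\<exists>\<^sub>\<infinity> n. p (\<pi> n) = Min (infp p \<pi>)"
proof -
  let ?k = "Min (infp p \<pi>)"
  have kin: "?k \<in> infp p \<pi>" using infp_fin infp_ne assms by auto
  then show "\<exists>\<^sub>\<infinity> n. p (\<pi> n) = Min (infp p \<pi>)" by (simp add: infp_def)
  have "finite {i. p (\<pi> i) = k}" if "k < ?k" for k
  proof -
    have "k \<notin> infp p \<pi>" using that infp_fin assms Min_le leD by blast
    then show ?thesis by (simp add: infp_def INFM_iff_infinite)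
  qed
  then have "finite (\<Union>k<?k. {i. p (\<pi> i) = k})" by auto
  then obtain N where N: "(\<Union>k<?k. {i. p (\<pi> i) = k}) \<subseteq> {..<N}" using finite_nat_bounded by blast
  show "\<exists>N. \<forall>n\<ge>N. Min (infp p \<pi>) \<le> p (\<pi> n)"
  proof (intro exI allI impI)
    fix n assume "N \<le> n"
    show "?k \<le> p (\<pi> n)"
    proof (rule ccontr)
      assume "\<not> ?k \<le> p (\<pi> n)"
      then have "n \<in> (\<Union>k<?k. {i. p (\<pi> i) = k})" by auto
      then have "n < N" using N by blast
      then show False using \<open>N \<le> n\<close> by simp
    qed
  qed
qed

lemma min_infp_eq:
  assumes "range \<pi> \<subseteq> V" "\<forall>n\<ge>N. q \<le> p (\<pi> n)" "\<exists>\<^sub>\<infinity> n. p (\<pi> n) = q"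
  shows "Min (infp p \<pi>) = q"
proof (rule Min_eqI)
  show "finite (infp p \<pi>)" using infp_fin assms by auto
  show "q \<in> infp p \<pi>" using assms by (simp add: infp_def)
  fix k assume k: "k \<in> infp p \<pi>"
  show "q \<le> k"
  proof (rule ccontr)
    assume "\<not> q \<le> k"
    then have "{i. p (\<pi> i) = k} \<subseteq> {..<N}" using assms(2) by (auto simp: not_le)
    then have "finite {i. p (\<pi> i) = k}" using finite_subset by blast
    then show False using k by (simp add: infp_def INFM_iff_infinite)
  qed
qed

lemma SS_finite:
  assumes "range \<pi> \<subseteq> V" "even_wins p \<pi>" "odd i"
  shows "finite (SS p \<pi> i)"
proof (rule ccontr)
  assume inf: "infinite (SS p \<pi> i)"
  have all: "\<forall>n\<ge>0. i \<le> p (\<pi> n)"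
  proof (intro allI impI)
    fix n
    obtain j where "j \<ge> n" "j \<in> SS p \<pi> i" using inf infinite_nat_iff_unbounded_le by blast
    then show "i \<le> p (\<pi> n)" by (auto simp: SS_def)
  qed
  have "SS p \<pi> i \<subseteq> {j. p (\<pi> j) = i}" by (auto simp: SS_def)
  then have "\<exists>\<^sub>\<infinity> n. p (\<pi> n) = i" using inf INFM_iff_infinite finite_subset by blast
  then have "Min (infp p \<pi>) = i" using min_infp_eq[OF assms(1) all] by blast
  then show False using assms by (simp add: even_wins_infp)
qed

definition thl :: "(nat \<Rightarrow> 'v) \<Rightarrow> nat list" where
  "thl \<pi> = map (\<lambda>i. if even i then 0 else degree p \<pi> i) [0..<d]"

lemma theta_eq: "theta V p \<pi> = (if even_wins p \<pi> then Some (thl \<pi>) else None)"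
  by (simp add: theta_def thl_def)

lemma thl_length[simp]: "length (thl \<pi>) = d" by (simp add: thl_def)

lemma thl_nth: "i < d \<Longrightarrow> thl \<pi> ! i = (if even i then 0 else degree p \<pi> i)"
  by (simp add: thl_def)

lemma theta_wl[simp]: "wl d (theta V p \<pi>)" by (simp add: theta_eq)

lemma SS_Suc:
  "SS p \<pi> i = (if p (\<pi> 0) = i then {0} else {}) \<union> (if i \<le> p (\<pi> 0) then Suc ` SS p (\<lambda>j. \<pi> (Suc j)) i else {})"
proof -
  have c: "(\<forall>k\<le>Suc j. P k) \<longleftrightarrow> P 0 \<and> (\<forall>k\<le>j. P (Suc k))" for P :: "nat \<Rightarrow> bool" and j
  proof
    assume "\<forall>k\<le>Suc j. P k" then show "P 0 \<and> (\<forall>k\<le>j. P (Suc k))" by auto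
  next
    assume h: "P 0 \<and> (\<forall>k\<le>j. P (Suc k))"
    show "\<forall>k\<le>Suc j. P k"
    proof (intro allI impI)
      fix k assume "k \<le> Suc j" then show "P k" using h by (cases k) auto
    qed
  qed
  have a: "Suc j \<in> SS p \<pi> i \<longleftrightarrow> i \<le> p (\<pi> 0) \<and> j \<in> SS p (\<lambda>j. \<pi> (Suc j)) i" for j
    unfolding SS_def using c[where P="\<lambda>k. i \<le> p (\<pi> k)" and j=j] by auto
  have b: "0 \<in> SS p \<pi> i \<longleftrightarrow> p (\<pi> 0) = i" unfolding SS_def by auto
  show ?thesis
  proof (intro set_eqI)
    fix j show "j \<in> SS p \<pi> i \<longleftrightarrow> j \<in> (if p (\<pi> 0) = i then {0} else {}) \<union> (if i \<le> p (\<pi> 0) then Suc ` SS p (\<lambda>j. \<pi> (Suc j)) i else {})"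
      using a b by (cases j) auto
  qed
qed

lemma theta_shift:
  assumes "range \<pi> \<subseteq> V"
  shows "theta V p \<pi> = ext d (p (\<pi> 0)) (theta V p (\<lambda>j. \<pi> (Suc j)))"
proof (cases "even_wins p \<pi>")
  case False
  then show ?thesis by (simp add: theta_eq even_wins_Suc)
next
  case True
  let ?\<pi>' = "\<lambda>j. \<pi> (Suc j)"
  let ?q = "p (\<pi> 0)"
  have r': "range ?\<pi>' \<subseteq> V" using assms by auto
  have T': "even_wins p ?\<pi>'" using True even_wins_Suc by blast
  have "thl \<pi> = extl d ?q (thl ?\<pi>')"
  proof (rule nth_equalityI)
    show "length (thl \<pi>) = length (extl d ?q (thl ?\<pi>'))" by simp
    fix i assume "i < length (thl \<pi>)"
    then have i: "i < d" by simp
    show "thl \<pi> ! i = extl d ?q (thl ?\<pi>') ! i"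
    proof (cases "even i")
      case True
      then show ?thesis using i by (auto simp: thl_nth extl_nth p_lt_d)
    next
      case False
      have f1: "finite (SS p \<pi> i)" using SS_finite assms True False by blast
      have f2: "finite (SS p ?\<pi>' i)" using SS_finite r' T' False by blast
      have cS: "card (Suc ` SS p ?\<pi>' i) = card (SS p ?\<pi>' i)" by (simp add: card_image)
      have cS2: "card (insert 0 (Suc ` SS p ?\<pi>' i)) = Suc (card (SS p ?\<pi>' i))"
        using f2 cS by (subst card_insert_disjoint) auto
      have qd: "?q < d" using assms p_lt_d by auto
      consider "i < ?q" | "i = ?q" | "?q < i" by linarith
      then show ?thesis
      proof cases
        case 1
        then have "SS p \<pi> i = Suc ` SS p ?\<pi>' i" by (subst SS_Suc) auto
        then show ?thesis using 1 i False f1 f2 cS by (simp add: thl_nth extl_nth degree_eq)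
      next
        case 2
        then have "SS p \<pi> i = insert 0 (Suc ` SS p ?\<pi>' i)" by (subst SS_Suc) auto
        then show ?thesis using 2 i False f1 f2 cS2 by (simp add: thl_nth extl_nth degree_eq)
      next
        case 3
        then have "SS p \<pi> i = {}" by (subst SS_Suc) auto
        then show ?thesis using 3 i False f1 by (simp add: thl_nth extl_nth degree_eq)
      qed
    qed
  qed
  then show ?thesis using True T' by (simp add: theta_eq)
qed

lemma transfer:
  assumes r1: "range \<pi>1 \<subseteq> V" and r2: "range \<pi>2 \<subseteq> V"
    and eq: "\<forall>m. \<pi>1 (s1 + m) = \<pi>2 (s2 + m)"
    and pre1: "\<forall>k<s1. q \<le> p (\<pi>1 k)" and pre2: "\<forall>k<s2. q \<le> p (\<pi>2 k)"
  shows "even_wins p \<pi>1 \<longleftrightarrow> even_wins p \<pi>2"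
    and "even_wins p \<pi>1 \<Longrightarrow> \<forall>i<q. i < d \<longrightarrow> thl \<pi>1 ! i = thl \<pi>2 ! i"
proof -
  have "(\<lambda>j. \<pi>1 (j + s1)) = (\<lambda>j. \<pi>2 (j + s2))" using eq by (auto simp: add.commute)
  then show ew: "even_wins p \<pi>1 \<longleftrightarrow> even_wins p \<pi>2"
    using even_wins_shift[of p \<pi>1 s1] even_wins_shift[of p \<pi>2 s2] by simp
  assume w1: "even_wins p \<pi>1"
  then have w2: "even_wins p \<pi>2" using ew by simp
  show "\<forall>i<q. i < d \<longrightarrow> thl \<pi>1 ! i = thl \<pi>2 ! i"
  proof (intro allI impI)
    fix i assume iq: "i < q" and id: "i < d"
    show "thl \<pi>1 ! i = thl \<pi>2 ! i"
    proof (cases "even i")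
      case True then show ?thesis using id by (simp add: thl_nth)
    next
      case False
      define K where "K = {m. p (\<pi>1 (s1 + m)) = i \<and> (\<forall>k\<le>m. i \<le> p (\<pi>1 (s1 + k)))}"
      have S1: "SS p \<pi>1 i = (\<lambda>m. s1 + m) ` K"
      proof (intro set_eqI iffI)
        fix j assume j: "j \<in> SS p \<pi>1 i"
        then have "\<not> j < s1" using pre1 iq by (auto simp: SS_def)
        then obtain m where "j = s1 + m" by (metis le_Suc_ex not_le)
        then show "j \<in> (\<lambda>m. s1 + m) ` K" using j by (auto simp: SS_def K_def)
      next
        fix j assume "j \<in> (\<lambda>m. s1 + m) ` K"
        then obtain m where m: "j = s1 + m" "m \<in> K" by auto
        have "\<forall>k\<le>j. i \<le> p (\<pi>1 k)"
        proof (intro allI impI)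
          fix k assume "k \<le> j"
          show "i \<le> p (\<pi>1 k)"
          proof (cases "k < s1")
            case True then show ?thesis using pre1 iq by force
          next
            case False
            then obtain k' where "k = s1 + k'" by (metis le_Suc_ex not_le)
            then show ?thesis using m \<open>k \<le> j\<close> by (auto simp: K_def)
          qed
        qed
        then show "j \<in> SS p \<pi>1 i" using m by (auto simp: SS_def K_def)
      qed
      have S2: "SS p \<pi>2 i = (\<lambda>m. s2 + m) ` K"
      proof (intro set_eqI iffI)
        fix j assume j: "j \<in> SS p \<pi>2 i"
        then have "\<not> j < s2" using pre2 iq by (auto simp: SS_def)
        then obtain m where m: "j = s2 + m" by (metis le_Suc_ex not_le)
        have "m \<in> K" unfolding K_def
        proof (intro CollectI conjI allI impI)
          show "p (\<pi>1 (s1 + m)) = i" using j m eq by (auto simp: SS_def)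
          fix k assume "k \<le> m" then show "i \<le> p (\<pi>1 (s1 + k))" using j m eq by (auto simp: SS_def)
        qed
        then show "j \<in> (\<lambda>m. s2 + m) ` K" using m by auto
      next
        fix j assume "j \<in> (\<lambda>m. s2 + m) ` K"
        then obtain m where m: "j = s2 + m" "m \<in> K" by auto
        have "\<forall>k\<le>j. i \<le> p (\<pi>2 k)"
        proof (intro allI impI)
          fix k assume "k \<le> j"
          show "i \<le> p (\<pi>2 k)"
          proof (cases "k < s2")
            case True then show ?thesis using pre2 iq by force
          next
            case False
            then obtain k' where k': "k = s2 + k'" by (metis le_Suc_ex not_le)
            then have "k' \<le> m" using \<open>k \<le> j\<close> m by auto
            then show ?thesis using m k' eq by (auto simp: K_def)
          qed
        qed
        then show "j \<in> SS p \<pi>2 i" using m eq by (auto simp: SS_def K_def)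
      qed
      have f1: "finite (SS p \<pi>1 i)" using SS_finite r1 w1 False by blast
      have f2: "finite (SS p \<pi>2 i)" using SS_finite r2 w2 False by blast
      have "card (SS p \<pi>1 i) = card K" using S1 by (simp add: card_image)
      moreover have "card (SS p \<pi>2 i) = card K" using S2 by (simp add: card_image)
      ultimately show ?thesis using id False f1 f2 by (simp add: thl_nth degree_eq)
    qed
  qed
qed

end

context pgame
begin

lemma take_extl_gt:
  assumes "k < q" "q < d" "length x = d"
  shows "take (Suc k) (extl d q x) = take (Suc k) x"
  using assms by (auto simp: list_eq_iff_nth_eq extl_nth)

lemma decr_contra:
  fixes h :: "nat \<Rightarrow> nat"
  assumes mono: "\<forall>n\<ge>N. h (Suc n) \<le> h n" and strict: "\<forall>n\<ge>N. P n \<longrightarrow> h (Suc n) < h n"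
    and inf: "\<exists>\<^sub>\<infinity> n. P n"
  shows False
proof -
  have cnt: "h (N + m) + card {j. j < m \<and> P (N + j)} \<le> h N" for m
  proof (induction m)
    case 0 then show ?case by simp
  next
    case (Suc m)
    show ?case
    proof (cases "P (N + m)")
      case True
      have "{j. j < Suc m \<and> P (N + j)} = insert m {j. j < m \<and> P (N + j)}" using True by (auto simp: less_Suc_eq)
      then have "card {j. j < Suc m \<and> P (N + j)} = Suc (card {j. j < m \<and> P (N + j)})" by simp
      moreover have "h (N + Suc m) < h (N + m)" using strict True by simp
      ultimately show ?thesis using Suc.IH by simp
    next
      case False
      have "{j. j < Suc m \<and> P (N + j)} = {j. j < m \<and> P (N + j)}" using False by (auto simp: less_Suc_eq)
      moreover have "h (N + Suc m) \<le> h (N + m)" using mono by simp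
      ultimately show ?thesis using Suc.IH by simp
    qed
  qed
  have "\<exists>\<^sub>\<infinity> j. P (j + N)" using inf INFM_shift[of P N] by simp
  then have "infinite {j. P (N + j)}" by (simp add: INFM_iff_infinite add.commute)
  then obtain B where B: "finite B" "card B = Suc (h N)" "B \<subseteq> {j. P (N + j)}"
    using infinite_arbitrarily_large by blast
  obtain m where m: "B \<subseteq> {..<m}" using finite_nat_bounded B by blast
  have "B \<subseteq> {j. j < m \<and> P (N + j)}" using B m by auto
  then have "Suc (h N) \<le> card {j. j < m \<and> P (N + j)}" using B card_mono[of "{j. j < m \<and> P (N + j)}" B] by auto
  then show False using cnt[of m] by simp
qed

lemma part2_core:
  assumes r: "range \<pi> \<subseteq> V" and rhoMM: "\<forall>v\<in>V. \<rho> v \<in> MM V p"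
    and good: "\<forall>n. meas_le (ext d (p (\<pi> n)) (\<rho> (\<pi> (Suc n)))) (\<rho> (\<pi> n))"
  shows "meas_le (theta V p \<pi>) (\<rho> (\<pi> 0))"
proof (cases "\<rho> (\<pi> 0)")
  case None then show ?thesis by simp
next
  case (Some x0)
  have inV: "\<pi> n \<in> V" for n using r by auto
  have notN: "\<rho> (\<pi> n) \<noteq> None" for n
  proof (induction n)
    case 0 then show ?case using Some by simp
  next
    case (Suc n)
    show ?case
    proof
      assume "\<rho> (\<pi> (Suc n)) = None"
      then have "meas_le None (\<rho> (\<pi> n))" using good[rule_format, of n] by simp
      then show False using Suc by (cases "\<rho> (\<pi> n)") auto
    qed
  qed
  define rr where "rr n = the (\<rho> (\<pi> n))" for n
  have rr: "\<rho> (\<pi> n) = Some (rr n)" for n using notN rr_def by auto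
  have rrMM: "Some (rr n) \<in> MM V p" for n using rr rhoMM inV by metis
  have rlen: "length (rr n) = d" for n using rrMM by (simp add: Some_MM)
  have goodl: "extl d (p (\<pi> n)) (rr (Suc n)) = rr n \<or> lex_lt (extl d (p (\<pi> n)) (rr (Suc n))) (rr n)" for n
    using good[rule_format, of n] rr by simp
  have ew: "even_wins p \<pi>"
  proof (rule ccontr)
    assume "\<not> even_wins p \<pi>"
    let ?k = "Min (infp p \<pi>)"
    have kodd: "odd ?k" using \<open>\<not> even_wins p \<pi>\<close> by (simp add: even_wins_infp)
    obtain N where N: "\<forall>n\<ge>N. ?k \<le> p (\<pi> n)" using min_infp(1)[OF r] by blast
    have kinf: "\<exists>\<^sub>\<infinity> n. p (\<pi> n) = ?k" using min_infp(2)[OF r] .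
    then obtain n0 where "p (\<pi> n0) = ?k" by (meson INFM_EX)
    then have kd: "?k < d" using p_lt_d inV by metis
    define T where "T n = take (Suc ?k) (rr n)" for n
    have Tlen: "length (T n) = Suc ?k" for n using kd rlen by (simp add: T_def)
    have step: "(T (Suc n) = T n \<or> lex_lt (T (Suc n)) (T n)) \<and> (p (\<pi> n) = ?k \<longrightarrow> lex_lt (T (Suc n)) (T n))"
      if "n \<ge> N" for n
    proof (cases "p (\<pi> n) = ?k")
      case True
      have "lex_lt (T (Suc n)) (T n)"
        using odd_lt_iff[of "rr (Suc n)" d "rr n" ?k] goodl[of n] True kd kodd rlen by (simp add: T_def)
      then show ?thesis by simp
    next
      case False
      then have gt: "?k < p (\<pi> n)" using N that by force
      have "take (Suc ?k) (extl d (p (\<pi> n)) (rr (Suc n))) = take (Suc ?k) (rr n) \<or>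
        lex_lt (take (Suc ?k) (extl d (p (\<pi> n)) (rr (Suc n)))) (take (Suc ?k) (rr n))"
        using lexle_take[of "extl d (p (\<pi> n)) (rr (Suc n))" d "rr n" "Suc ?k"] goodl[of n] rlen kd by simp
      then show ?thesis using take_extl_gt[OF gt p_lt_d[OF inV] rlen] False by (simp add: T_def)
    qed
    define X where "X = {ys. set ys \<subseteq> {0..card V} \<and> length ys = Suc ?k}"
    have finX: "finite X" unfolding X_def by (intro finite_lists_length_eq) simp
    have TX: "T n \<in> X" for n
    proof -
      have "\<forall>x\<in>set (rr n). x \<le> card V"
      proof
        fix x assume "x \<in> set (rr n)"
        then obtain i where i: "i < length (rr n)" "rr n!i = x" by (auto simp: in_set_conv_nth)
        have "card {v \<in> V. p v = i} \<le> card V" using finV by (intro card_mono) auto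
        then show "x \<le> card V" using rrMM[of n] i by (auto simp: Some_MM)
      qed
      then have "set (T n) \<subseteq> {0..card V}" unfolding T_def using set_take_subset by fastforce
      then show ?thesis using Tlen by (simp add: X_def)
    qed
    define h where "h n = card {s \<in> X. lex_lt s (T n)}" for n
    have mono: "\<forall>n\<ge>N. h (Suc n) \<le> h n"
    proof (intro allI impI)
      fix n assume "N \<le> n"
      have "{s \<in> X. lex_lt s (T (Suc n))} \<subseteq> {s \<in> X. lex_lt s (T n)}"
      proof
        fix s assume s: "s \<in> {s \<in> X. lex_lt s (T (Suc n))}"
        then have ls: "length s = Suc ?k" by (simp add: X_def)
        show "s \<in> {s \<in> X. lex_lt s (T n)}"
          using step[OF \<open>N \<le> n\<close>] s lex_lt_trans[of s "T (Suc n)" "T n"] ls Tlen by auto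
      qed
      then show "h (Suc n) \<le> h n" unfolding h_def by (intro card_mono) (use finX in auto)
    qed
    have strict: "\<forall>n\<ge>N. p (\<pi> n) = ?k \<longrightarrow> h (Suc n) < h n"
    proof (intro allI impI)
      fix n assume "N \<le> n" "p (\<pi> n) = ?k"
      then have lt: "lex_lt (T (Suc n)) (T n)" using step by blast
      have "{s \<in> X. lex_lt s (T (Suc n))} \<subset> {s \<in> X. lex_lt s (T n)}"
      proof
        show "{s \<in> X. lex_lt s (T (Suc n))} \<subseteq> {s \<in> X. lex_lt s (T n)}"
        proof
          fix s assume s: "s \<in> {s \<in> X. lex_lt s (T (Suc n))}"
          then have ls: "length s = Suc ?k" by (simp add: X_def)
          show "s \<in> {s \<in> X. lex_lt s (T n)}"
            using lt s lex_lt_trans[of s "T (Suc n)" "T n"] ls Tlen by auto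
        qed
        have "T (Suc n) \<in> {s \<in> X. lex_lt s (T n)}" using lt TX by simp
        moreover have "T (Suc n) \<notin> {s \<in> X. lex_lt s (T (Suc n))}" using lex_lt_irrefl by simp
        ultimately show "{s \<in> X. lex_lt s (T (Suc n))} \<noteq> {s \<in> X. lex_lt s (T n)}" by blast
      qed
      then show "h (Suc n) < h n" unfolding h_def by (intro psubset_card_mono) (use finX in auto)
    qed
    show False using decr_contra[OF mono strict kinf] .
  qed
  let ?k = "Min (infp p \<pi>)"
  have keven: "even ?k" using ew by (simp add: even_wins_infp)
  obtain N where N: "\<forall>n\<ge>N. ?k \<le> p (\<pi> n)" using min_infp(1)[OF r] by blast
  have kinf: "\<exists>\<^sub>\<infinity> n. p (\<pi> n) = ?k" using min_infp(2)[OF r] .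
  then obtain M where M: "M \<ge> N" "p (\<pi> M) = ?k" unfolding INFM_nat_le by blast
  define ps where "ps n = (\<lambda>j. \<pi> (j + n))" for n
  have psr: "range (ps n) \<subseteq> V" for n using r by (auto simp: ps_def)
  have psS: "(\<lambda>j. ps n (Suc j)) = ps (Suc n)" for n by (auto simp: ps_def)
  have ps0: "ps n 0 = \<pi> n" for n by (simp add: ps_def)
  have psew: "even_wins p (ps n)" for n using ew even_wins_shift[of p \<pi> n] by (simp add: ps_def)
  have thsh: "theta V p (ps n) = ext d (p (\<pi> n)) (theta V p (ps (Suc n)))" for n
    using theta_shift[OF psr[of n]] psS ps0 by simp
  have kd: "?k < d" using M p_lt_d inV by metis
  have base: "meas_le (theta V p (ps M)) (\<rho> (\<pi> M))"
  proof -
    have "extl d ?k (thl (ps (Suc M))) = replicate d 0"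
    proof (rule nth_equalityI)
      show "length (extl d ?k (thl (ps (Suc M)))) = length (replicate d 0)" by simp
      fix i assume "i < length (extl d ?k (thl (ps (Suc M))))"
      then have i: "i < d" by simp
      have SSe: "SS p (ps (Suc M)) i = {}" if ik: "i < ?k"
      proof -
        have "\<forall>j. p (ps (Suc M) j) \<noteq> i"
        proof
          fix j
          have "N \<le> j + Suc M" using M by simp
          then have "?k \<le> p (\<pi> (j + Suc M))" using N by blast
          then show "p (ps (Suc M) j) \<noteq> i" using ik by (simp add: ps_def)
        qed
        then show ?thesis by (auto simp: SS_def)
      qed
      show "extl d ?k (thl (ps (Suc M))) ! i = replicate d 0 ! i"
        using i keven kd SSe by (auto simp: extl_nth thl_nth degree_eq)
    qed
    then have "theta V p (ps M) = Some (replicate d 0)"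
      using thsh[of M] psew[of "Suc M"] M by (simp add: theta_eq)
    then show ?thesis using zero_le[of "\<rho> (\<pi> M)"] MM_wl rhoMM inV by metis
  qed
  have ind: "meas_le (theta V p (ps (M - j))) (\<rho> (\<pi> (M - j)))" for j
  proof (induction j)
    case 0 then show ?case using base by simp
  next
    case (Suc j)
    show ?case
    proof (cases "Suc j \<le> M")
      case False
      then have "M - Suc j = M - j" by simp
      then show ?thesis using Suc by simp
    next
      case True
      define n where "n = M - Suc j"
      have nS: "Suc n = M - j" using True n_def by simp
      have wl1: "wl d (\<rho> (\<pi> (Suc n)))" using MM_wl rhoMM inV by metis
      have "meas_le (ext d (p (\<pi> n)) (theta V p (ps (Suc n)))) (ext d (p (\<pi> n)) (\<rho> (\<pi> (Suc n))))"
        using ext_mono[of d "theta V p (ps (Suc n))" "\<rho> (\<pi> (Suc n))" "p (\<pi> n)"] Suc nS wl1 p_lt_d inV by simp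
      then have "meas_le (theta V p (ps n)) (ext d (p (\<pi> n)) (\<rho> (\<pi> (Suc n))))"
        using thsh[of n] by simp
      moreover have "meas_le (ext d (p (\<pi> n)) (\<rho> (\<pi> (Suc n)))) (\<rho> (\<pi> n))" using good by blast
      moreover have "wl d (\<rho> (\<pi> n))" using MM_wl rhoMM inV by metis
      ultimately have "meas_le (theta V p (ps n)) (\<rho> (\<pi> n))"
        using meas_le_trans[of d "theta V p (ps n)" "ext d (p (\<pi> n)) (\<rho> (\<pi> (Suc n)))" "\<rho> (\<pi> n)"]
        by simp
      then show ?thesis using n_def by simp
    qed
  qed
  show ?thesis using ind[of M] ps0 by (simp add: ps_def)
qed

end

lemma map_upt_shift: "map \<pi> [0..<Suc m] = \<pi> 0 # map (\<lambda>j. \<pi> (Suc j)) [0..<m]"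
proof -
  have "[0..<Suc m] = 0 # map Suc [0..<m]" by (simp add: upt_conv_Cons map_Suc_upt del: upt_Suc)
  then show ?thesis by simp
qed

lemma last_map_upt: "last (map \<pi> [0..<Suc n]) = \<pi> n"
  by simp

context pgame
begin

lemma play_range: "play V E \<pi> \<Longrightarrow> range \<pi> \<subseteq> V"
  by (auto simp: play_def)

lemma play_edge: "play V E \<pi> \<Longrightarrow> \<pi> (Suc n) \<in> post E (\<pi> n)"
  by (auto simp: play_def post_def)

lemma play_Suc: "play V E \<pi> \<Longrightarrow> play V E (\<lambda>j. \<pi> (Suc j))"
  by (auto simp: play_def)

theorem part2:
  assumes gp: "gppm V E p VE \<rho>" and vV: "v \<in> V"
  shows "\<exists>\<sigma>E. strategy V E VE \<sigma>E \<and> positional V VE \<sigma>E \<and>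
        (\<forall>\<pi>. play V E \<pi> \<and> \<pi> 0 = v \<and> consistent VE \<sigma>E \<pi> \<longrightarrow> meas_le (theta V p \<pi>) (\<rho> v))"
proof -
  have rhoMM: "\<forall>v\<in>V. \<rho> v \<in> MM V p" using gp by (simp add: gppm_def)
  define good where "good u w \<longleftrightarrow> w \<in> post E u \<and> meas_le (ext d (p u) (\<rho> w)) (\<rho> u)" for u w
  define \<sigma>E where "\<sigma>E xs = (SOME w. good (last xs) w)" for xs
  have exg: "\<exists>w. good u w" if uVE: "u \<in> VE" for u
  proof -
    obtain w where w: "w \<in> post E u" "meas_le_i (p u) (Prog V p \<rho> u w) (\<rho> u)"
      using gp uVE unfolding gppm_def by blast
    have "u \<in> V" using uVE VE_sub by auto
    then show ?thesis using gppm_step[OF rhoMM \<open>u \<in> V\<close> w] w good_def by blast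
  qed
  have gs: "good u (\<sigma>E xs)" if "u \<in> VE" "last xs = u" for u xs
    unfolding \<sigma>E_def using someI_ex[OF exg[OF that(1)]] that(2) by simp
  have "strategy V E VE \<sigma>E"
    unfolding strategy_def using gs good_def by blast
  moreover have "positional V VE \<sigma>E"
    unfolding positional_def \<sigma>E_def by simp
  moreover have "meas_le (theta V p \<pi>) (\<rho> v)" if "play V E \<pi>" "\<pi> 0 = v" "consistent VE \<sigma>E \<pi>" for \<pi>
  proof -
    have r: "range \<pi> \<subseteq> V" using play_range that by blast
    have "meas_le (ext d (p (\<pi> n)) (\<rho> (\<pi> (Suc n)))) (\<rho> (\<pi> n))" for n
    proof (cases "\<pi> n \<in> VE")
      case True
      then have "\<pi> (Suc n) = \<sigma>E (map \<pi> [0..<Suc n])" using that by (simp add: consistent_def)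
      then show ?thesis using gs[OF True last_map_upt[of \<pi> n]] good_def by simp
    next
      case False
      have inV: "\<pi> n \<in> V" using r by auto
      have w: "\<pi> (Suc n) \<in> post E (\<pi> n)" using play_edge that by blast
      then have "meas_le_i (p (\<pi> n)) (Prog V p \<rho> (\<pi> n) (\<pi> (Suc n))) (\<rho> (\<pi> n))"
        using gp False inV by (auto simp: gppm_def)
      then show ?thesis using gppm_step[OF rhoMM inV w] by simp
    qed
    then show ?thesis using part2_core[OF r rhoMM] that by simp
  qed
  ultimately show ?thesis by blast
qed

definition Guar :: "'v \<Rightarrow> meas \<Rightarrow> bool" where
  "Guar v x \<longleftrightarrow> (\<exists>\<sigma>. strategy V E (V - VE) \<sigma> \<and>
     (\<forall>\<pi>. play V E \<pi> \<and> \<pi> 0 = v \<and> consistent (V - VE) \<sigma> \<pi> \<longrightarrow> meas_le x (theta V p \<pi>)))"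

definition dflt :: "'v \<Rightarrow> 'v" where "dflt u = (SOME w. (u, w) \<in> E)"

lemma dflt: assumes "u \<in> V" shows "dflt u \<in> post E u"
proof -
  have "\<exists>w. (u, w) \<in> E" using total assms by blast
  then have "(u, SOME w. (u, w) \<in> E) \<in> E" by (rule someI_ex)
  then show ?thesis unfolding dflt_def post_def by simp
qed

lemma strat_dflt: "strategy V E X (\<lambda>xs. dflt (last xs))"
  unfolding strategy_def using dflt last_in_set by blast

lemma G_mono:
  assumes "Guar v x" "wl d y" "wl d x" "meas_le y x"
  shows "Guar v y"
  using assms meas_le_trans[of d y x] unfolding Guar_def by (meson theta_wl)

lemma G_zero: "Guar v (Some (replicate d 0))"
  unfolding Guar_def using strat_dflt zero_le theta_wl by blast

lemma G_step:
  assumes uV: "u \<in> V" and w0: "w0 \<in> post E u" and A: "A = (if u \<in> VE then post E u else {w0})"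
    and wx: "wl d x"
    and hyp: "\<forall>w\<in>A. \<exists>a. wl d a \<and> Guar w a \<and> meas_le x (ext d (p u) a)"
  shows "Guar u x"
proof -
  define Pw where "Pw w \<sigma> \<longleftrightarrow> (\<forall>\<pi>. play V E \<pi> \<and> \<pi> 0 = w \<and> consistent (V - VE) \<sigma> \<pi> \<longrightarrow>
      meas_le x (ext d (p u) (theta V p \<pi>)))" for w \<sigma>
  have ex: "\<exists>\<sigma>. strategy V E (V - VE) \<sigma> \<and> (w \<in> A \<longrightarrow> Pw w \<sigma>)" for w
  proof (cases "w \<in> A")
    case True
    then obtain a \<sigma> where a: "wl d a" "meas_le x (ext d (p u) a)" "strategy V E (V - VE) \<sigma>"
      "\<forall>\<pi>. play V E \<pi> \<and> \<pi> 0 = w \<and> consistent (V - VE) \<sigma> \<pi> \<longrightarrow> meas_le a (theta V p \<pi>)"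
      using hyp unfolding Guar_def by blast
    have "Pw w \<sigma>" unfolding Pw_def
    proof (intro allI impI)
      fix \<pi> assume h: "play V E \<pi> \<and> \<pi> 0 = w \<and> consistent (V - VE) \<sigma> \<pi>"
      then have "meas_le a (theta V p \<pi>)" using a by blast
      then have "meas_le (ext d (p u) a) (ext d (p u) (theta V p \<pi>))"
        using ext_mono[of d a "theta V p \<pi>" "p u"] a p_lt_d uV by simp
      then show "meas_le x (ext d (p u) (theta V p \<pi>))"
        using meas_le_trans[of d x "ext d (p u) a" "ext d (p u) (theta V p \<pi>)"] a wx by simp
    qed
    then show ?thesis using a by blast
  next
    case False then show ?thesis using strat_dflt by blast
  qed
  define \<Sigma> where "\<Sigma> w = (SOME \<sigma>. strategy V E (V - VE) \<sigma> \<and> (w \<in> A \<longrightarrow> Pw w \<sigma>))" for w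
  have \<Sigma>: "strategy V E (V - VE) (\<Sigma> w) \<and> (w \<in> A \<longrightarrow> Pw w (\<Sigma> w))" for w
    unfolding \<Sigma>_def using someI_ex[OF ex] by blast
  define \<sigma> where "\<sigma> xs = (if tl xs = [] then (if hd xs = u \<and> u \<notin> VE then w0 else dflt (hd xs))
      else \<Sigma> (hd (tl xs)) (tl xs))" for xs
  have strat: "strategy V E (V - VE) \<sigma>"
    unfolding strategy_def
  proof (intro allI impI)
    fix xs assume xs: "xs \<noteq> [] \<and> set xs \<subseteq> V \<and> last xs \<in> V - VE"
    show "\<sigma> xs \<in> post E (last xs)"
    proof (cases "tl xs = []")
      case True
      then have xs1: "xs = [hd xs]" using xs by (cases xs) auto
      then have "last xs = hd xs" by (metis last_ConsL)
      moreover have "hd xs \<in> V" using xs xs1 by (metis hd_in_set subsetD)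
      ultimately show ?thesis using True w0 dflt unfolding \<sigma>_def by auto
    next
      case False
      have "last (tl xs) = last xs" using False by (metis last_tl)
      moreover have "set (tl xs) \<subseteq> V" using xs by (meson list.set_sel(2) subset_code(1) False subsetD) 
      ultimately show ?thesis using \<Sigma>[of "hd (tl xs)"] False xs unfolding \<sigma>_def strategy_def by auto
    qed
  qed
  have "meas_le x (theta V p \<pi>)" if h: "play V E \<pi>" "\<pi> 0 = u" "consistent (V - VE) \<sigma> \<pi>" for \<pi>
  proof -
    let ?\<pi>' = "\<lambda>j. \<pi> (Suc j)"
    have r: "range \<pi> \<subseteq> V" using play_range h by blast
    have inA: "\<pi> 1 \<in> A"
    proof (cases "u \<in> VE")
      case True
      then show ?thesis using A play_edge[OF h(1), of 0] h(2) by simp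
    next
      case False
      then have "\<pi> (Suc 0) = \<sigma> (map \<pi> [0..<Suc 0])" using h uV by (simp add: consistent_def)
      then have "\<pi> 1 = w0" using h False unfolding \<sigma>_def by simp
      then show ?thesis using A False by simp
    qed
    have cons': "consistent (V - VE) (\<Sigma> (\<pi> 1)) ?\<pi>'"
      unfolding consistent_def
    proof (intro allI impI)
      fix n assume "?\<pi>' n \<in> V - VE"
      then have "\<pi> (Suc (Suc n)) = \<sigma> (map \<pi> [0..<Suc (Suc n)])" using h by (simp add: consistent_def)
      also have "map \<pi> [0..<Suc (Suc n)] = \<pi> 0 # map ?\<pi>' [0..<Suc n]" by (rule map_upt_shift)
      finally show "?\<pi>' (Suc n) = \<Sigma> (\<pi> 1) (map ?\<pi>' [0..<Suc n])"
        unfolding \<sigma>_def by (simp del: upt_Suc add: map_upt_shift)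
    qed
    have "Pw (\<pi> 1) (\<Sigma> (\<pi> 1))" using \<Sigma> inA by blast
    then have "meas_le x (ext d (p u) (theta V p ?\<pi>'))"
      unfolding Pw_def using play_Suc[OF h(1)] cons' by simp
    then show ?thesis using theta_shift[OF r] h(2) by simp
  qed
  then show ?thesis unfolding Guar_def using strat by blast
qed

end

context pgame
begin

definition rst :: "nat \<Rightarrow> 'v list \<Rightarrow> 'v \<Rightarrow> bool" where
  "rst q ys y \<longleftrightarrow> p y = q \<and> (\<forall>z\<in>set ys. q \<le> p z) \<and> y \<in> set ys"

definition vstep :: "nat \<Rightarrow> 'v list \<Rightarrow> 'v \<Rightarrow> 'v list" where
  "vstep q ys y = (if rst q ys y then take (Suc (LEAST i. i < length ys \<and> ys!i = y)) ys else ys @ [y])"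

definition vh :: "nat \<Rightarrow> 'v list \<Rightarrow> 'v list" where
  "vh q xs = foldl (vstep q) [] xs"

lemma vstep_cases:
  "(rst q ys y \<and> (\<exists>i<length ys. ys!i = y \<and> vstep q ys y = take (Suc i) ys)) \<or>
   (\<not> rst q ys y \<and> vstep q ys y = ys @ [y])"
proof (cases "rst q ys y")
  case True
  then have "\<exists>i. i < length ys \<and> ys!i = y" by (auto simp: rst_def in_set_conv_nth)
  then have "(LEAST i. i < length ys \<and> ys!i = y) < length ys \<and> ys!(LEAST i. i < length ys \<and> ys!i = y) = y"
    by (rule LeastI_ex)
  then show ?thesis using True by (auto simp: vstep_def)
qed (simp add: vstep_def)

lemma vstep_basic: "vstep q ys y \<noteq> [] \<and> last (vstep q ys y) = y \<and> set (vstep q ys y) \<subseteq> insert y (set ys)"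
  using vstep_cases[of q ys y]
  by (auto simp: take_Suc_conv_app_nth dest: in_set_takeD)

lemma vh_snoc: "vh q (xs @ [y]) = vstep q (vh q xs) y"
  by (simp add: vh_def)

lemma vh_props: "xs \<noteq> [] \<Longrightarrow> vh q xs \<noteq> [] \<and> last (vh q xs) = last xs \<and> set (vh q xs) \<subseteq> set xs"
proof (induction xs rule: rev_induct)
  case Nil then show ?case by simp
next
  case (snoc y xs)
  show ?case
  proof (cases "xs = []")
    case True
    then show ?thesis using vstep_basic[of q "[]" y] by (simp add: vh_snoc, simp add: vh_def)
  next
    case False
    then show ?thesis using snoc.IH vstep_basic[of q "vh q xs" y] by (auto simp: vh_snoc)
  qed
qed

definition GL :: "nat \<Rightarrow> ('v list \<Rightarrow> 'v) \<Rightarrow> 'v list \<Rightarrow> bool" where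
  "GL q \<sigma> ys \<longleftrightarrow> ys \<noteq> [] \<and> set ys \<subseteq> V
    \<and> (\<forall>j. Suc j < length ys \<longrightarrow> (ys!j, ys!Suc j) \<in> E)
    \<and> (\<forall>j. Suc j < length ys \<longrightarrow> ys!j \<in> V - VE \<longrightarrow> ys!Suc j = \<sigma> (take (Suc j) ys))
    \<and> (\<forall>j1 j2. j1 < j2 \<longrightarrow> j2 < length ys \<longrightarrow> (\<forall>k\<le>j2. q \<le> p (ys!k)) \<longrightarrow> p (ys!j1) = q \<longrightarrow> p (ys!j2) = q
          \<longrightarrow> ys!j1 \<noteq> ys!j2)"

lemma GL_take:
  assumes "GL q \<sigma> ys" "0 < m"
  shows "GL q \<sigma> (take m ys)"
proof -
  have ne: "take m ys \<noteq> []" using assms by (auto simp: GL_def)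
  have s: "set (take m ys) \<subseteq> V" using assms set_take_subset by (fastforce simp: GL_def)
  show ?thesis unfolding GL_def
  proof (intro conjI ne s allI impI)
    fix j assume "Suc j < length (take m ys)"
    then show "(take m ys!j, take m ys!Suc j) \<in> E" using assms by (auto simp: GL_def)
  next
    fix j assume j: "Suc j < length (take m ys)" "take m ys!j \<in> V - VE"
    then have jm: "Suc j < m" "Suc j < length ys" by auto
    then have "take m ys!j = ys!j" "take m ys!Suc j = ys!Suc j" "take (Suc j) (take m ys) = take (Suc j) ys"
      by (auto simp: min_def)
    then show "take m ys!Suc j = \<sigma> (take (Suc j) (take m ys))" using assms j jm unfolding GL_def by auto
  next
    fix j1 j2 assume h: "j1 < j2" "j2 < length (take m ys)" "\<forall>k\<le>j2. q \<le> p (take m ys!k)"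
      "p (take m ys!j1) = q" "p (take m ys!j2) = q"
    then have "\<forall>k\<le>j2. q \<le> p (ys!k)" by auto
    then show "take m ys!j1 \<noteq> take m ys!j2" using h assms unfolding GL_def by auto
  qed
qed

lemma GL_snoc:
  assumes g: "GL q \<sigma> ys" and nr: "\<not> rst q ys y" and e: "(last ys, y) \<in> E"
    and c: "last ys \<in> V - VE \<longrightarrow> y = \<sigma> ys"
  shows "GL q \<sigma> (ys @ [y])"
proof -
  have ne: "ys \<noteq> []" using g by (simp add: GL_def)
  have lastn: "last ys = ys ! (length ys - 1)" using ne by (simp add: last_conv_nth)
  have yV: "y \<in> V" using e E_sub by auto
  show ?thesis unfolding GL_def
  proof (intro conjI allI impI)
    show "ys @ [y] \<noteq> []" by simp
    show "set (ys @ [y]) \<subseteq> V" using g yV by (auto simp: GL_def)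
  next
    fix j assume j: "Suc j < length (ys @ [y])"
    show "((ys @ [y])!j, (ys @ [y])!Suc j) \<in> E"
    proof (cases "Suc j < length ys")
      case True then show ?thesis using g by (auto simp: GL_def nth_append)
    next
      case False
      then have "j = length ys - 1" using j by simp
      then show ?thesis using e lastn ne by (auto simp: nth_append)
    qed
  next
    fix j assume j: "Suc j < length (ys @ [y])" "(ys @ [y])!j \<in> V - VE"
    show "(ys @ [y])!Suc j = \<sigma> (take (Suc j) (ys @ [y]))"
    proof (cases "Suc j < length ys")
      case True then show ?thesis using g j by (auto simp: GL_def nth_append)
    next
      case False
      then have jj: "j = length ys - 1" using j by simp
      then have "Suc j = length ys" using ne by (cases ys) auto
      then show ?thesis using c j jj lastn ne by (auto simp: nth_append)
    qed
  next
    fix j1 j2 assume h: "j1 < j2" "j2 < length (ys @ [y])" "\<forall>k\<le>j2. q \<le> p ((ys @ [y])!k)"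
      "p ((ys @ [y])!j1) = q" "p ((ys @ [y])!j2) = q"
    show "(ys @ [y])!j1 \<noteq> (ys @ [y])!j2"
    proof (cases "j2 < length ys")
      case True
      have "\<forall>k\<le>j2. q \<le> p (ys!k)" using h True by (auto simp: nth_append)
      then show ?thesis using g h True unfolding GL_def by (auto simp: nth_append)
    next
      case False
      then have j2: "j2 = length ys" using h by simp
      have all: "\<forall>z\<in>set ys. q \<le> p z"
      proof
        fix z assume "z \<in> set ys"
        then obtain k where k: "k < length ys" "ys!k = z" by (auto simp: in_set_conv_nth)
        then show "q \<le> p z" using h(3) j2 by (auto simp: nth_append dest: spec[of _ k])
      qed
      have py: "p y = q" using h j2 by simp
      have "y \<notin> set ys" using nr all py by (auto simp: rst_def)
      moreover have "(ys @ [y])!j1 \<in> set ys" using h j2 by (auto simp: nth_append)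
      ultimately show ?thesis using j2 by auto
    qed
  qed
qed

lemma GL_vstep:
  assumes g: "GL q \<sigma> ys" and e: "(last ys, y) \<in> E" and c: "last ys \<in> V - VE \<longrightarrow> y = \<sigma> ys"
  shows "GL q \<sigma> (vstep q ys y)"
  using vstep_cases[of q ys y] GL_take[OF g] GL_snoc[OF g _ e c] by auto

end

context pgame
begin

declare upt_Suc[simp del]

lemma carry:
  assumes vV: "v \<in> V" and qodd: "odd q" and qd: "q < d"
    and strat: "strategy V E (V - VE) \<sigma>"
    and guar: "\<forall>\<pi>. play V E \<pi> \<and> \<pi> 0 = v \<and> consistent (V - VE) \<sigma> \<pi> \<longrightarrow> meas_le (Some xs) (theta V p \<pi>)"
    and lx: "length xs = d" and big: "card {v \<in> V. p v = q} < xs!q"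
  shows "\<exists>\<sigma>'. strategy V E (V - VE) \<sigma>' \<and> (\<forall>\<pi>. play V E \<pi> \<and> \<pi> 0 = v \<and> consistent (V - VE) \<sigma>' \<pi> \<longrightarrow>
      theta V p \<pi> = None \<or> (\<exists>ys. theta V p \<pi> = Some ys \<and> (\<exists>k<q. (\<forall>j<k. xs!j = ys!j) \<and> xs!k < ys!k)))"
proof -
  define \<sigma>' where "\<sigma>' zs = \<sigma> (vh q zs)" for zs
  have strat': "strategy V E (V - VE) \<sigma>'"
    unfolding strategy_def \<sigma>'_def
  proof (intro allI impI)
    fix ys assume ys: "ys \<noteq> [] \<and> set ys \<subseteq> V \<and> last ys \<in> V - VE"
    then have "vh q ys \<noteq> [] \<and> last (vh q ys) = last ys \<and> set (vh q ys) \<subseteq> set ys" using vh_props by blast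
    then show "\<sigma> (vh q ys) \<in> post E (last ys)" using strat ys unfolding strategy_def by (metis subset_trans)
  qed
  have main: "theta V p \<pi> = None \<or> (\<exists>ys. theta V p \<pi> = Some ys \<and> (\<exists>k<q. (\<forall>j<k. xs!j = ys!j) \<and> xs!k < ys!k))"
    if h: "play V E \<pi>" "\<pi> 0 = v" "consistent (V - VE) \<sigma>' \<pi>" for \<pi>
  proof -
    define H where "H n = vh q (map \<pi> [0..<Suc n])" for n
    have r: "range \<pi> \<subseteq> V" using play_range h by blast
    have H0: "H 0 = [v]" using h by (simp add: H_def vh_def vstep_def rst_def upt_Suc)
    have HS: "H (Suc n) = vstep q (H n) (\<pi> (Suc n))" for n
    proof -
      have "map \<pi> [0..<Suc (Suc n)] = map \<pi> [0..<Suc n] @ [\<pi> (Suc n)]" by (simp add: upt_Suc)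
      then show ?thesis unfolding H_def by (simp only: vh_snoc)
    qed
    have Inv: "GL q \<sigma> (H n) \<and> last (H n) = \<pi> n \<and> H n ! 0 = v
       \<and> ((\<exists>k\<le>n. p (\<pi> k) < q) \<longrightarrow> (\<exists>z\<in>set (H n). p z < q)) \<and> set (butlast (H n)) \<subseteq> \<pi> ` {..<n}" for n
    proof (induction n)
      case 0
      have "GL q \<sigma> [v]" using vV by (simp add: GL_def)
      then show ?case using H0 h by auto
    next
      case (Suc n)
      let ?ys = "H n" and ?y = "\<pi> (Suc n)"
      have g: "GL q \<sigma> ?ys" and l: "last ?ys = \<pi> n" and h0: "?ys ! 0 = v" using Suc by auto
      have ne: "?ys \<noteq> []" using g by (simp add: GL_def)
      have e: "(last ?ys, ?y) \<in> E" using l h(1) by (simp add: play_def)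
      have c: "last ?ys \<in> V - VE \<longrightarrow> ?y = \<sigma> ?ys"
        using h(3) l unfolding consistent_def \<sigma>'_def H_def by auto
      have G: "GL q \<sigma> (H (Suc n))" using GL_vstep[OF g e c] HS by simp
      have L: "last (H (Suc n)) = \<pi> (Suc n)" using vstep_basic HS by simp
      have H0': "H (Suc n) ! 0 = v"
        using vstep_cases[of q ?ys ?y] HS h0 ne by (auto simp: nth_append)
      have F: "(\<exists>k\<le>Suc n. p (\<pi> k) < q) \<longrightarrow> (\<exists>z\<in>set (H (Suc n)). p z < q)"
      proof
        assume "\<exists>k\<le>Suc n. p (\<pi> k) < q"
        then obtain k where k: "k \<le> Suc n" "p (\<pi> k) < q" by blast
        show "\<exists>z\<in>set (H (Suc n)). p z < q"
        proof (cases "k \<le> n")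
          case True
          then obtain z where z: "z \<in> set ?ys" "p z < q" using Suc k by blast
          then have "\<not> rst q ?ys ?y" unfolding rst_def using leD by blast
          then have "H (Suc n) = ?ys @ [?y]" using vstep_cases[of q ?ys ?y] HS by auto
          then show ?thesis using z by auto
        next
          case False
          then have "k = Suc n" using k by simp
          then have "p ?y < q" using k by simp
          then have "\<not> rst q ?ys ?y" by (auto simp: rst_def)
          then have "H (Suc n) = ?ys @ [?y]" using vstep_cases[of q ?ys ?y] HS by auto
          then show ?thesis using \<open>p ?y < q\<close> by auto
        qed
      qed
      have sys: "set ?ys \<subseteq> \<pi> ` {..<Suc n}"
      proof -
        have "?ys = butlast ?ys @ [last ?ys]" using ne by simp
        then have "set ?ys = set (butlast ?ys) \<union> {\<pi> n}" using l by (metis set_append empty_set list.simps(15))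
        then show ?thesis using Suc by auto
      qed
      have B: "set (butlast (H (Suc n))) \<subseteq> \<pi> ` {..<Suc n}"
      proof (cases "rst q ?ys ?y")
        case True
        then obtain i where i: "i < length ?ys" "H (Suc n) = take (Suc i) ?ys"
          using vstep_cases[of q ?ys ?y] HS by auto
        then have "butlast (H (Suc n)) = take i ?ys" by (simp add: butlast_take)
        then show ?thesis using sys set_take_subset by (metis subset_trans)
      next
        case False
        then have "H (Suc n) = ?ys @ [?y]" using vstep_cases[of q ?ys ?y] HS by auto
        then show ?thesis using sys by simp
      qed
      show ?case using G L H0' F B by blast
    qed
    have fin: "theta V p \<pi> = None \<or> (\<exists>ys. theta V p \<pi> = Some ys \<and> (\<exists>k<q. (\<forall>j<k. xs!j = ys!j) \<and> xs!k < ys!k))"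
      if NR: "\<forall>n\<ge>t. \<not> rst q (H n) (\<pi> (Suc n))" and PRE: "\<forall>k<t. q \<le> p (\<pi> k)" for t
    proof -
      have HL: "H (t + m) = H t @ map \<pi> [Suc t..<Suc (t + m)]" for m
      proof (induction m)
        case 0 then show ?case by simp
      next
        case (Suc m)
        have "H (t + Suc m) = vstep q (H (t + m)) (\<pi> (Suc (t + m)))" using HS by simp
        also have "\<dots> = H (t + m) @ [\<pi> (Suc (t + m))]" using NR vstep_cases[of q "H (t + m)" "\<pi> (Suc (t + m))"] by auto
        finally show ?case using Suc by (simp add: upt_Suc)
      qed
      define L where "L = length (H t) - 1"
      have neHt: "H t \<noteq> []" using Inv[of t] by (simp add: GL_def)
      have lenHt: "length (H t) = Suc L" using neHt L_def by (cases "H t") auto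
      define \<pi>t where "\<pi>t j = (if j < L then H t ! j else \<pi> (t + (j - L)))" for j
      have HM: "H (t + m) = map \<pi>t [0..<Suc (L + m)]" for m
      proof (rule nth_equalityI)
        show "length (H (t + m)) = length (map \<pi>t [0..<Suc (L + m)])" using HL[of m] lenHt by (simp del: upt_Suc)
        fix j assume "j < length (H (t + m))"
        then have j: "j < Suc (L + m)" using HL[of m] lenHt by (simp del: upt_Suc)
        show "H (t + m) ! j = map \<pi>t [0..<Suc (L + m)] ! j"
        proof (cases "j < Suc L")
          case True
          then have "H (t + m) ! j = H t ! j" using HL[of m] lenHt by (simp add: nth_append del: upt_Suc)
          moreover have "H t ! L = \<pi> t" using Inv[of t] neHt lenHt by (simp add: last_conv_nth)
          ultimately show ?thesis using True j by (auto simp: \<pi>t_def less_Suc_eq)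
        next
          case False
          then have "H (t + m) ! j = map \<pi> [Suc t..<Suc (t + m)] ! (j - Suc L)" using HL[of m] lenHt by (simp add: nth_append del: upt_Suc)
          also have "\<dots> = \<pi> (Suc t + (j - Suc L))" using False j by (simp del: upt_Suc)
          finally have e1: "H (t + m) ! j = \<pi> (Suc t + (j - Suc L))" .
          have e2: "map \<pi>t [0..<Suc (L + m)] ! j = \<pi> (t + (j - L))" using False j by (simp add: \<pi>t_def)
          have ar: "Suc t + (j - Suc L) = t + (j - L)" using False by simp
          show ?thesis by (metis e1 e2 ar)
        qed
      qed
      have GLm: "GL q \<sigma> (H (t + m))" for m using Inv by blast
      have pt_in: "\<pi>t j = H (t + m) ! j" if "j < Suc (L + m)" for j m using HM that by simp
      have lenm: "length (H (t + m)) = Suc (L + m)" for m using HM by simp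
      have rt: "range \<pi>t \<subseteq> V"
      proof
        fix x assume "x \<in> range \<pi>t"
        then obtain j where x: "x = \<pi>t j" by blast
        have "H (t + j) ! j \<in> set (H (t + j))" using lenm by simp
        then show "x \<in> V" using GLm[of j] pt_in[of j j] x by (auto simp: GL_def)
      qed
      have edge: "(\<pi>t j, \<pi>t (Suc j)) \<in> E" for j
        using GLm[of "Suc j"] pt_in[of j "Suc j"] pt_in[of "Suc j" "Suc j"] lenm[of "Suc j"] unfolding GL_def by auto
      have playt: "play V E \<pi>t" using rt edge by (auto simp: play_def)
      have t0: "\<pi>t 0 = v" using pt_in[of 0 0] Inv[of t] by simp
      have const: "consistent (V - VE) \<sigma> \<pi>t"
        unfolding consistent_def
      proof (intro allI impI)
        fix j assume jv: "\<pi>t j \<in> V - VE"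
        let ?Hm = "H (t + Suc j)"
        have tk: "take (Suc j) ?Hm = map \<pi>t [0..<Suc j]" using HM[of "Suc j"] by (simp add: take_map)
        show "\<pi>t (Suc j) = \<sigma> (map \<pi>t [0..<Suc j])"
          using GLm[of "Suc j"] pt_in[of j "Suc j"] pt_in[of "Suc j" "Suc j"] lenm[of "Suc j"] jv tk
          unfolding GL_def by auto
      qed
      have gt: "meas_le (Some xs) (theta V p \<pi>t)" using guar playt t0 const by blast
      have injS: "inj_on \<pi>t (SS p \<pi>t q)"
      proof -
        have neq: "\<pi>t j1 \<noteq> \<pi>t j2" if "j1 < j2" "j1 \<in> SS p \<pi>t q" "j2 \<in> SS p \<pi>t q" for j1 j2
        proof -
          let ?Hm = "H (t + j2)"
          have a1: "\<forall>k\<le>j2. q \<le> p (?Hm ! k)" using that pt_in[of _ j2] by (auto simp: SS_def)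
          have a2: "p (?Hm ! j1) = q" "p (?Hm ! j2) = q" using that pt_in[of _ j2] by (auto simp: SS_def)
          have "?Hm ! j1 \<noteq> ?Hm ! j2" using GLm[of j2] a1 a2 that(1) lenm[of j2] unfolding GL_def by auto
          then show ?thesis using pt_in[of j1 j2] pt_in[of j2 j2] that(1) by simp
        qed
        show ?thesis
        proof (rule inj_onI)
          fix x y assume "x \<in> SS p \<pi>t q" "y \<in> SS p \<pi>t q" "\<pi>t x = \<pi>t y"
          then show "x = y" using neq by (metis linorder_neqE_nat)
        qed
      qed
      have imS: "\<pi>t ` SS p \<pi>t q \<subseteq> {v \<in> V. p v = q}" using rt by (auto simp: SS_def)
      have finQ: "finite {v \<in> V. p v = q}" using finV by simp
      have finS: "finite (SS p \<pi>t q)" using finite_imageD[OF finite_subset[OF imS finQ] injS] .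
      have cardS: "card (SS p \<pi>t q) \<le> card {v \<in> V. p v = q}"
        using card_image[OF injS] card_mono[OF finQ imS] by simp
      have pre1: "\<forall>k<L. q \<le> p (\<pi>t k)"
      proof (intro allI impI)
        fix k assume k: "k < L"
        have "H t ! k = butlast (H t) ! k" using k lenHt by (simp add: nth_butlast)
        then have "H t ! k \<in> set (butlast (H t))" using k lenHt by simp
        then obtain k' where "k' < t" "H t ! k = \<pi> k'" using Inv[of t] by blast
        then show "q \<le> p (\<pi>t k)" using PRE k by (simp add: \<pi>t_def)
      qed
      have eqs: "\<forall>m. \<pi>t (L + m) = \<pi> (t + m)" by (simp add: \<pi>t_def)
      note T = transfer[OF rt r eqs pre1 PRE]
      show ?thesis
      proof (cases "even_wins p \<pi>t")
        case False
        then show ?thesis using T(1) by (simp add: theta_eq)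
      next
        case True
        have ew: "even_wins p \<pi>" using T(1) True by simp
        have gl: "xs = thl \<pi>t \<or> lex_lt xs (thl \<pi>t)" using gt True by (simp add: theta_eq)
        have tq: "thl \<pi>t ! q = card (SS p \<pi>t q)" using qodd qd finS by (simp add: thl_nth degree_eq)
        have tq2: "thl \<pi>t ! q < xs ! q" using tq cardS big by simp
        then have "xs \<noteq> thl \<pi>t" by auto
        then have "lex_lt xs (thl \<pi>t)" using gl by simp
        then obtain k where k: "k < d" "\<forall>j<k. xs!j = thl \<pi>t!j" "xs!k < thl \<pi>t!k"
          using lex_lt_nth[OF lx thl_length] by blast
        have kq: "k < q"
        proof (rule ccontr)
          assume "\<not> k < q"
          then consider "k = q" | "q < k" by linarith
          then show False
          proof cases
            case 1 then show False using k tq2 by simp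
          next
            case 2 then show False using k(2) tq2 by auto
          qed
        qed
        have "\<forall>j<q. j < d \<longrightarrow> thl \<pi>t ! j = thl \<pi> ! j" using T(2)[OF True] by simp
        then have "(\<forall>j<k. xs!j = thl \<pi>!j) \<and> xs!k < thl \<pi>!k" using k kq by auto
        then show ?thesis using ew kq by (auto simp: theta_eq)
      qed
    qed
    consider (A) "\<exists>k. p (\<pi> k) < q" | (B1) "\<forall>k. q \<le> p (\<pi> k)" "\<exists>\<^sub>\<infinity> k. p (\<pi> k) = q"
      | (B2) "\<forall>k. q \<le> p (\<pi> k)" "\<not> (\<exists>\<^sub>\<infinity> k. p (\<pi> k) = q)"
      by (meson not_le)
    then show ?thesis
    proof cases
      case A
      define t where "t = (LEAST k. p (\<pi> k) < q)"
      have pt: "p (\<pi> t) < q" using A LeastI_ex t_def by metis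
      have PRE: "\<forall>k<t. q \<le> p (\<pi> k)" using not_less_Least t_def by (metis not_le)
      have NR: "\<forall>n\<ge>t. \<not> rst q (H n) (\<pi> (Suc n))"
      proof (intro allI impI)
        fix n assume "t \<le> n"
        then obtain z where "z \<in> set (H n)" "p z < q" using Inv[of n] pt by blast
        then show "\<not> rst q (H n) (\<pi> (Suc n))" unfolding rst_def using leD by blast
      qed
      show ?thesis using fin[OF NR PRE] .
    next
      case B1
      have "Min (infp p \<pi>) = q" using min_infp_eq[OF r, of 0 q] B1 by simp
      then have "\<not> even_wins p \<pi>" using qodd by (simp add: even_wins_infp)
      then show ?thesis by (simp add: theta_eq)
    next
      case B2
      then have "finite {k. p (\<pi> k) = q}" by (simp add: INFM_iff_infinite)
      then obtain t where t: "{k. p (\<pi> k) = q} \<subseteq> {..<t}" using finite_nat_bounded by blast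
      have NR: "\<forall>n\<ge>t. \<not> rst q (H n) (\<pi> (Suc n))"
      proof (intro allI impI)
        fix n assume "t \<le> n"
        then have "p (\<pi> (Suc n)) \<noteq> q" using t by auto
        then show "\<not> rst q (H n) (\<pi> (Suc n))" by (auto simp: rst_def)
      qed
      have PRE: "\<forall>k<t. q \<le> p (\<pi> k)" using B2 by simp
      show ?thesis using fin[OF NR PRE] .
    qed
  qed
  show ?thesis using strat' main by blast
qed

declare upt_Suc[simp]

end

context pgame
begin

definition ovf :: "nat list \<Rightarrow> nat \<Rightarrow> bool" where
  "ovf xs i \<longleftrightarrow> i < d \<and> odd i \<and> card {v \<in> V. p v = i} < xs!i"

lemma no_ovf_MM:
  assumes "length xs = d" "\<forall>i<d. even i \<longrightarrow> xs!i = 0" "\<forall>i. \<not> ovf xs i"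
  shows "Some xs \<in> MM V p"
proof -
  have "\<forall>i<d. odd i \<longrightarrow> xs!i \<le> card {v \<in> V. p v = i}" using assms(3) unfolding ovf_def by (meson not_less)
  then show ?thesis using assms(1,2) unfolding Some_MM by blast
qed

lemma Guar_None_from:
  assumes "strategy V E (V - VE) \<sigma>"
    "\<forall>\<pi>. play V E \<pi> \<and> \<pi> 0 = v \<and> consistent (V - VE) \<sigma> \<pi> \<longrightarrow> theta V p \<pi> = None"
  shows "Guar v None"
  using assms unfolding Guar_def by auto

lemma ceil_ind:
  assumes vV: "v \<in> V"
  shows "\<forall>xs. length xs = d \<and> (\<forall>i<d. even i \<longrightarrow> xs!i = 0) \<and> (\<forall>i. ovf xs i \<longrightarrow> i < k) \<and> Guar v (Some xs)
     \<longrightarrow> (\<exists>c\<in>MM V p. meas_le (Some xs) c \<and> Guar v c)"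
proof (induction k)
  case 0
  show ?case
  proof (intro allI impI)
    fix xs assume a: "length xs = d \<and> (\<forall>i<d. even i \<longrightarrow> xs!i = 0) \<and> (\<forall>i. ovf xs i \<longrightarrow> i < 0) \<and> Guar v (Some xs)"
    then have "\<forall>i. \<not> ovf xs i" by auto
    then have "Some xs \<in> MM V p" using no_ovf_MM a by blast
    then show "\<exists>c\<in>MM V p. meas_le (Some xs) c \<and> Guar v c" using a by (intro bexI[of _ "Some xs"]) auto
  qed
next
  case (Suc k)
  show ?case
  proof (intro allI impI)
    fix xs assume a: "length xs = d \<and> (\<forall>i<d. even i \<longrightarrow> xs!i = 0) \<and> (\<forall>i. ovf xs i \<longrightarrow> i < Suc k) \<and> Guar v (Some xs)"
    show "\<exists>c\<in>MM V p. meas_le (Some xs) c \<and> Guar v c"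
    proof (cases "\<exists>i. ovf xs i")
      case False
      then have "Some xs \<in> MM V p" using no_ovf_MM a by blast
      then show ?thesis using a by (intro bexI[of _ "Some xs"]) auto
    next
      case True
      define q where "q = (LEAST i. ovf xs i)"
      have oq: "ovf xs q" using True LeastI_ex q_def by metis
      have below: "\<not> ovf xs i" if "i < q" for i using that not_less_Least q_def by blast
      have qodd: "odd q" and qd: "q < d" and big: "card {v \<in> V. p v = q} < xs!q" using oq by (auto simp: ovf_def)
      have qk: "q < Suc k" using a oq by blast
      obtain \<sigma> where \<sigma>: "strategy V E (V - VE) \<sigma>"
        "\<forall>\<pi>. play V E \<pi> \<and> \<pi> 0 = v \<and> consistent (V - VE) \<sigma> \<pi> \<longrightarrow> meas_le (Some xs) (theta V p \<pi>)"
        using a unfolding Guar_def by blast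
      obtain \<sigma>' where \<sigma>': "strategy V E (V - VE) \<sigma>'"
        "\<forall>\<pi>. play V E \<pi> \<and> \<pi> 0 = v \<and> consistent (V - VE) \<sigma>' \<pi> \<longrightarrow>
          theta V p \<pi> = None \<or> (\<exists>ys. theta V p \<pi> = Some ys \<and> (\<exists>k<q. (\<forall>j<k. xs!j = ys!j) \<and> xs!k < ys!k))"
        using carry[OF vV qodd qd \<sigma>(1) \<sigma>(2)] a big by blast
      have kodd: "odd k'" "k' < q" if "theta V p \<pi> = Some ys" "k' < q" "xs!k' < ys!k'" for \<pi> ys k'
      proof -
        have "ys = thl \<pi>" using that by (simp add: theta_eq split: if_splits)
        then have "even k' \<longrightarrow> ys!k' = 0" using that qd by (simp add: thl_nth)
        then show "odd k'" "k' < q" using that by auto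
      qed
      show ?thesis
      proof (cases "q = 1")
        case True
        have "Guar v None"
        proof (rule Guar_None_from[OF \<sigma>'(1)], intro allI impI)
          fix \<pi> assume "play V E \<pi> \<and> \<pi> 0 = v \<and> consistent (V - VE) \<sigma>' \<pi>"
          then have "theta V p \<pi> = None \<or> (\<exists>ys. theta V p \<pi> = Some ys \<and> (\<exists>k<q. (\<forall>j<k. xs!j = ys!j) \<and> xs!k < ys!k))"
            using \<sigma>'(2) by blast
          then show "theta V p \<pi> = None" using kodd True by fastforce
        qed
        then show ?thesis by (intro bexI[of _ None]) auto
      next
        case False
        then have q3: "q \<ge> 3" using qodd by presburger
        define r where "r = q - 2"
        have rq: "r < q" "odd r" using q3 qodd r_def by auto
        define xs' where "xs' = map (\<lambda>i. if i < r then xs!i else if i = r then Suc (xs!i) else 0) [0..<d]"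
        have lx': "length xs' = d" by (simp add: xs'_def)
        have nth': "i < d \<Longrightarrow> xs'!i = (if i < r then xs!i else if i = r then Suc (xs!i) else 0)" for i
          by (simp add: xs'_def)
        have G': "Guar v (Some xs')"
          unfolding Guar_def
        proof (intro exI conjI allI impI)
          show "strategy V E (V - VE) \<sigma>'" using \<sigma>'(1) .
          fix \<pi> assume h: "play V E \<pi> \<and> \<pi> 0 = v \<and> consistent (V - VE) \<sigma>' \<pi>"
          show "meas_le (Some xs') (theta V p \<pi>)"
          proof (cases "theta V p \<pi>")
            case None then show ?thesis by simp
          next
            case (Some ys)
            then obtain k' where k': "k' < q" "\<forall>j<k'. xs!j = ys!j" "xs!k' < ys!k'"
              using \<sigma>'(2) h by fastforce
            have ly: "length ys = d" using Some theta_wl[of \<pi>] by simp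
            have ko: "odd k'" using kodd[OF Some k'(1,3)] by blast
            have kr: "k' \<le> r" using ko k'(1) r_def qodd by presburger
            have kd: "k' < d" using k'(1) qd by simp
            have eqb: "\<forall>j<k'. xs'!j = ys!j" using k'(2) kr kd nth' by auto
            show ?thesis
            proof (cases "k' < r")
              case True
              have "xs'!k' < ys!k'" using True k' kd nth' by simp
              then have "lex_lt xs' ys" using lex_lt_nth[OF lx' ly] eqb kd by blast
              then show ?thesis using Some by simp
            next
              case False
              then have kr': "k' = r" using kr by simp
              then have "xs'!k' \<le> ys!k'" using k' kd nth' by simp
              then consider "xs'!k' < ys!k'" | "xs'!k' = ys!k'" by linarith
              then show ?thesis
              proof cases
                case 1
                then have "lex_lt xs' ys" using lex_lt_nth[OF lx' ly] eqb kd by blast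
                then show ?thesis using Some by simp
              next
                case 2
                have "\<forall>j<Suc k'. xs'!j = ys!j" using eqb 2 less_Suc_eq by auto
                moreover have "\<forall>j. Suc k' \<le> j \<longrightarrow> j < d \<longrightarrow> xs'!j = 0" using nth' kr' by auto
                ultimately show ?thesis using zero_tail_le[OF lx' ly, of "Suc k'"] Some by simp
              qed
            qed
          qed
        qed
        have ez': "\<forall>i<d. even i \<longrightarrow> xs'!i = 0" using a nth' rq by auto
        have ov': "\<forall>i. ovf xs' i \<longrightarrow> i < k"
        proof (intro allI impI)
          fix i assume oi: "ovf xs' i"
          then have id: "i < d" by (simp add: ovf_def)
          show "i < k"
          proof (cases "i \<le> r")
            case True
            then show ?thesis using qk rq by simp
          next
            case False
            then have "xs'!i = 0" using nth' id by simp
            then show ?thesis using oi by (simp add: ovf_def)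
          qed
        qed
        obtain c where c: "c \<in> MM V p" "meas_le (Some xs') c" "Guar v c"
          using Suc.IH lx' ez' ov' G' by blast
        have "lex_lt xs xs'"
        proof -
          have "r < d" using rq qd by simp
          moreover have "\<forall>j<r. xs!j = xs'!j" using nth' rq qd by auto
          moreover have "xs!r < xs'!r" using nth' rq qd by simp
          ultimately show ?thesis using lex_lt_nth[of xs d xs'] a lx' by blast
        qed
        then have "meas_le (Some xs) (Some xs')" by simp
        then have "meas_le (Some xs) c" using meas_le_trans[of d "Some xs" "Some xs'" c] c MM_wl a lx' by simp
        then show ?thesis using c by blast
      qed
    qed
  qed
qed

lemma ceil:
  assumes "v \<in> V" "Guar v x" "x = ext d q a" "a \<in> MM V p" "q < d"
  shows "\<exists>c\<in>MM V p. meas_le x c \<and> Guar v c"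
proof (cases a)
  case None
  then show ?thesis using assms by (intro bexI[of _ None]) auto
next
  case (Some xs0)
  have l0: "length xs0 = d" and ez0: "\<forall>i<d. even i \<longrightarrow> xs0!i = 0" using assms Some by (auto simp: Some_MM)
  have ez: "\<forall>i<d. even i \<longrightarrow> extl d q xs0 ! i = 0" using ez0 assms by (auto simp: extl_nth)
  have ov: "\<forall>i. ovf (extl d q xs0) i \<longrightarrow> i < d" by (simp add: ovf_def)
  show ?thesis using ceil_ind[OF assms(1), of d] ez ov assms Some by auto
qed

definition g :: "'v \<Rightarrow> meas" where
  "g v = (SOME c. c \<in> MM V p \<and> Guar v c \<and> (\<forall>c'\<in>MM V p. Guar v c' \<longrightarrow> meas_le c' c))"

lemma g_props:
  assumes "v \<in> V"
  shows "g v \<in> MM V p \<and> Guar v (g v) \<and> (\<forall>c'\<in>MM V p. Guar v c' \<longrightarrow> meas_le c' (g v))"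
proof -
  let ?S = "{c \<in> MM V p. Guar v c}"
  have "\<exists>m\<in>?S. \<forall>x\<in>?S. (\<lambda>a b. meas_le b a) m x"
  proof (rule ex_min)
    show "finite ?S" using finite_MM by auto
    show "?S \<noteq> {}" using zero_MM G_zero by blast
    show "\<forall>a\<in>?S. \<forall>b\<in>?S. meas_le b a \<or> meas_le a b" using meas_le_total MM_wl by blast
    show "\<forall>a\<in>?S. \<forall>b\<in>?S. \<forall>c\<in>?S. meas_le b a \<longrightarrow> meas_le c b \<longrightarrow> meas_le c a"
      using meas_le_trans MM_wl by blast
  qed
  then have "\<exists>c. c \<in> MM V p \<and> Guar v c \<and> (\<forall>c'\<in>MM V p. Guar v c' \<longrightarrow> meas_le c' c)" by auto
  then show ?thesis unfolding g_def by (rule someI_ex)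
qed

lemma g_step:
  assumes uV: "u \<in> V" and w0: "w0 \<in> post E u" and A: "A = (if u \<in> VE then post E u else {w0})"
    and min: "\<forall>w\<in>A. meas_le (ext d (p u) (g w0)) (ext d (p u) (g w))"
  shows "meas_le_i (p u) (Prog V p g u w0) (g u)"
proof -
  have w0V: "w0 \<in> V" using w0 post_sub by auto
  have AV: "A \<subseteq> V" using A post_sub w0V by auto
  let ?x = "ext d (p u) (g w0)"
  have "Guar u ?x"
  proof (rule G_step[OF uV w0 A])
    show "wl d ?x" by simp
    show "\<forall>w\<in>A. \<exists>a. wl d a \<and> Guar w a \<and> meas_le ?x (ext d (p u) a)"
      using g_props AV min MM_wl by blast
  qed
  then have "\<exists>c\<in>MM V p. meas_le ?x c \<and> Guar u c"
    by (rule ceil[OF uV _ refl]) (use g_props[OF w0V] p_lt_d[OF uV] in auto)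
  then obtain c where c: "c \<in> MM V p" "meas_le ?x c" "Guar u c" by blast
  have "meas_le c (g u)" using g_props[OF uV] c by blast
  then show ?thesis using gppm_back[of g w0 u c "g u"] g_props w0V uV c by blast
qed

lemma g_gppm: "gppm V E p VE g"
  unfolding gppm_def
proof (intro conjI ballI)
  fix v assume "v \<in> V" then show "g v \<in> MM V p" using g_props by blast
next
  fix v assume vE: "v \<in> VE"
  then have vV: "v \<in> V" using VE_sub by auto
  let ?R = "\<lambda>w w'. meas_le (ext d (p v) (g w)) (ext d (p v) (g w'))"
  have "\<exists>w0\<in>post E v. \<forall>w\<in>post E v. ?R w0 w"
  proof (rule ex_min)
    show "finite (post E v)" using post_fin .
    show "post E v \<noteq> {}" using post_ne vV .
    show "\<forall>a\<in>post E v. \<forall>b\<in>post E v. ?R a b \<or> ?R b a" using meas_le_total ext_wl by blast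
    show "\<forall>a\<in>post E v. \<forall>b\<in>post E v. \<forall>c\<in>post E v. ?R a b \<longrightarrow> ?R b c \<longrightarrow> ?R a c"
      using meas_le_trans ext_wl by blast
  qed
  then obtain w0 where w0: "w0 \<in> post E v" "\<forall>w\<in>post E v. ?R w0 w" by blast
  have "meas_le_i (p v) (Prog V p g v w0) (g v)"
    by (rule g_step[OF vV w0(1) refl]) (use w0 vE in simp)
  then show "\<exists>w\<in>post E v. meas_le_i (p v) (Prog V p g v w) (g v)" using w0 by blast
next
  fix v w assume v: "v \<in> V - VE" and w: "w \<in> post E v"
  show "meas_le_i (p v) (Prog V p g v w) (g v)"
    by (rule g_step[OF _ w refl]) (use v in auto)
qed

theorem part1:
  assumes lg: "least_gppm V E p VE \<rho>" and vV: "v \<in> V"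
  shows "\<exists>\<sigma>O. strategy V E (V - VE) \<sigma>O \<and>
        (\<forall>\<pi>. play V E \<pi> \<and> \<pi> 0 = v \<and> consistent (V - VE) \<sigma>O \<pi> \<longrightarrow> meas_le (\<rho> v) (theta V p \<pi>))"
proof -
  have le: "meas_le (\<rho> v) (g v)" using lg g_gppm vV unfolding least_gppm_def by blast
  have rMM: "\<rho> v \<in> MM V p" using lg vV unfolding least_gppm_def gppm_def by blast
  have "Guar v (\<rho> v)" using G_mono[of v "g v" "\<rho> v"] g_props[OF vV] le rMM MM_wl by blast
  then show ?thesis unfolding Guar_def .
qed

end

theorem theorem3:
  fixes V :: "'v set" and E :: "('v \<times> 'v) set" and p :: "'v \<Rightarrow> nat" and VE :: "'v set"
    and \<rho> :: "'v \<Rightarrow> meas"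
  assumes "parity_game V E p VE"
    and "least_gppm V E p VE \<rho>"
  shows "\<forall>v\<in>V.
     (\<exists>\<sigma>O. strategy V E (V - VE) \<sigma>O \<and>
        (\<forall>\<pi>. play V E \<pi> \<and> \<pi> 0 = v \<and> consistent (V - VE) \<sigma>O \<pi> \<longrightarrow> meas_le (\<rho> v) (theta V p \<pi>)))
   \<and> (\<exists>\<sigma>E. strategy V E VE \<sigma>E \<and> positional V VE \<sigma>E \<and>
        (\<forall>\<pi>. play V E \<pi> \<and> \<pi> 0 = v \<and> consistent VE \<sigma>E \<pi> \<longrightarrow> meas_le (theta V p \<pi>) (\<rho> v)))"
proof
  fix v assume vV: "v \<in> V"
  interpret pgame V E p VE using assms(1) by unfold_locales
  have gp: "gppm V E p VE \<rho>" using assms(2) by (simp add: least_gppm_def)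
  show "(\<exists>\<sigma>O. strategy V E (V - VE) \<sigma>O \<and>
        (\<forall>\<pi>. play V E \<pi> \<and> \<pi> 0 = v \<and> consistent (V - VE) \<sigma>O \<pi> \<longrightarrow> meas_le (\<rho> v) (theta V p \<pi>)))
   \<and> (\<exists>\<sigma>E. strategy V E VE \<sigma>E \<and> positional V VE \<sigma>E \<and>
        (\<forall>\<pi>. play V E \<pi> \<and> \<pi> 0 = v \<and> consistent VE \<sigma>E \<pi> \<longrightarrow> meas_le (theta V p \<pi>) (\<rho> v)))"
    using part1[OF assms(2) vV] part2[OF gp vV] by blast
qed


end
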